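(* Let $k_1,\dots,k_l$ be positive integers with $(k_1,\dots,k_l)\ne(1,1,\dots,1)$ and put $k=k_1+\cdots+k_l$. Then \[ \sum_{i=1}^l\sum_{j=0}^{k_i-2}\zeta_q^t(k_i-j,k_{i+1},\dots,k_l,k_1,\dots,k_{i-1},j+1) =(1-t)\sum_{i=1}^l\zeta_q^t(k_i+1,k_{i+1},\dots,k_l,k_1,\dots,k_{i-1}) +t^l\sum_{i=0}^l(k-i)(1-q)^i\binom{l}{i}\zeta_q^t(k-i+1). \]
   Context: Let $q$, $t$ be formal parameters and $[n]=\frac{1-q^n}{1-q}$. For positive integers $k_1,\dots,k_l$ with $k_1\ge 2$ put $\zeta_q(k_1,\dots,k_l)=\sum_{m_1>m_2>\cdots>m_l\ge1}\prod_{a=1}^l \frac{q^{(k_a-1)m_a}}{[m_a]^{k_a}}\in\mathbb{Q}[[q]]$. The weight of an index $(k_1,\dots,k_l)$ is $k_1+\cdots+k_l$ and its depth is $l$. Define $\zeta_q^t(k_1,\dots,k_l)=\sum'_{\mathbf p}(1-q)^{k-\mathrm{wt}(\mathbf p)}\zeta_q(\mathbf p)\,t^{l-\mathrm{dep}(\mathbf p)}\in\mathbb{Q}[[q]][t]$, where $k=k_1+\cdots+k_l$ and $\mathbf p$ runs over all indices of the form $(k_1\ \square\ k_2\ \square\cdots\square\ k_l)$ in which each $\square$ is filled by one of the three symbols "," (comma), "$+$" or "$-1+$". In particular $\zeta_q^t(n)=\zeta_q(n)=\sum_{m\ge1}q^{(n-1)m}/[m]^n$. An inner sum $\sum_{j=0}^{k_i-2}$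 is empty when $k_i=1$. *)

theory Defs
  imports "HOL-Computational_Algebra.Formal_Power_Series" "HOL-Computational_Algebra.Polynomial"
begin

definition qint :: "nat \<Rightarrow> rat fps" where
  "qint m = (1 - fps_X ^ m) * inverse (1 - fps_X)"

definition zq_term :: "nat list \<Rightarrow> nat list \<Rightarrow> rat fps" where
  "zq_term ks ms = (\<Prod>a<length ks. fps_X ^ ((ks!a - 1) * ms!a) * inverse (qint (ms!a)) ^ (ks!a))"

text \<open>zeta_q(k_1,...,k_l) = sum over m_1 > ... > m_l \<ge> 1. For k_1 \<ge> 2 the summand has
  q-order at least m_1, so the coefficient of q^N only involves tuples with m_1 \<le> N;
  the formal (q-adically convergent) sum is therefore given coefficientwise by finite sums.\<close>
definition zeta_q :: "nat list \<Rightarrow> rat fps" where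
  "zeta_q ks = Abs_fps (\<lambda>N. fps_nth
     (\<Sum>ms\<in>{ms. length ms = length ks \<and> sorted_wrt (>) ms \<and> set ms \<subseteq> {1..N}}. zq_term ks ms) N)"

text \<open>All indices obtained by filling each box between consecutive entries with
  ",", "+" or "-1+" (listed with multiplicity, one per filling).\<close>
fun fillings :: "nat list \<Rightarrow> nat list list" where
  "fillings [] = [[]]"
| "fillings [k] = [[k]]"
| "fillings (k # k' # ks) =
     concat (map (\<lambda>p. [k # p, (k + hd p) # tl p, (k + hd p - 1) # tl p]) (fillings (k' # ks)))"

definition zeta_qt :: "nat list \<Rightarrow> rat fps poly" where
  "zeta_qt ks = (\<Sum>p\<leftarrow>fillings ks.
      monom ((1 - fps_X) ^ (sum_list ks - sum_list p) * zeta_q p) (length ks - length p))"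

end

theory Submission
  imports Defs
begin

unbundle fps_syntax

lemma qint_nth: "qint m $ i = (if i < m then 1 else 0)"
proof -
  have inv: "inverse (1 - fps_X :: rat fps) = Abs_fps (\<lambda>_. 1)"
  proof -
    have "(1 - fps_X) * Abs_fps (\<lambda>_. 1::rat) = 1"
      by (rule fps_ext) (auto simp: fps_mult_nth sum.atLeast_Suc_atMost)
    hence "inverse (1 - fps_X :: rat fps) = inverse (1 - fps_X) * ((1 - fps_X) * Abs_fps (\<lambda>_. 1))"
      by simp
    also have "\<dots> = Abs_fps (\<lambda>_. 1)"
      by (subst mult.assoc[symmetric], subst inverse_mult_eq_1) auto
    finally show ?thesis .
  qed
  show ?thesis unfolding qint_def inv
    by (auto simp: algebra_simps fps_X_power_mult_right_nth)
qed

lemma qint0: "m \<ge> 1 \<Longrightarrow> qint m $ 0 = 1" by (simp add: qint_nth)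

definition u :: "nat \<Rightarrow> rat fps" where "u m = inverse (qint m)"

lemma qu: "m \<ge> 1 \<Longrightarrow> qint m * u m = 1"
  unfolding u_def by (rule inverse_mult_eq_1') (simp add: qint0)

lemma u0: "u 0 = 0"
proof -
  have "qint 0 = 0" by (rule fps_ext) (simp add: qint_nth)
  thus ?thesis by (simp add: u_def)
qed

lemma qint_1mX: "(1 - fps_X) * qint m = 1 - fps_X ^ m"
proof -
  have "(1 - fps_X) * inverse (1 - fps_X :: rat fps) = 1"
    by (rule inverse_mult_eq_1') simp
  thus ?thesis unfolding qint_def by (metis mult.commute mult.left_commute mult_1_right)
qed

lemma qint_add: "qint (b + d) = qint b + fps_X ^ b * qint d"
  by (rule fps_ext) (auto simp: qint_nth fps_X_power_mult_nth)

lemma u_G: "m \<ge> 1 \<Longrightarrow> u m = fps_X ^ m * u m + (1 - fps_X)"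
proof -
  assume m: "m \<ge> 1"
  have "u m - fps_X ^ m * u m = (1 - fps_X ^ m) * u m" by (simp add: algebra_simps)
  also have "\<dots> = (1 - fps_X) * (qint m * u m)" by (simp add: qint_1mX[symmetric] algebra_simps)
  also have "\<dots> = 1 - fps_X" using qu[OF m] by simp
  finally show ?thesis by (simp add: algebra_simps)
qed

definition ff :: "nat \<Rightarrow> nat \<Rightarrow> rat fps" where
  "ff k m = fps_X ^ ((k - 1) * m) * u m ^ k"

definition G :: "nat \<Rightarrow> rat fps" where "G m = fps_X ^ m * u m"

lemma ff_Suc: "k \<ge> 1 \<Longrightarrow> ff (Suc k) m = G m * ff k m"
proof -
  assume "k \<ge> 1"
  then obtain k' where k: "k = Suc k'" by (cases k) auto
  have "(fps_X::rat fps) ^ ((Suc k - 1) * m) = fps_X ^ m * fps_X ^ ((k - 1) * m)"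
    using k by (simp add: power_add[symmetric])
  thus ?thesis unfolding ff_def G_def by (simp add: algebra_simps)
qed

lemma ff_0: "k \<ge> 1 \<Longrightarrow> ff k 0 = 0"
  by (simp add: ff_def u0)

lemma core: "b \<ge> 1 \<Longrightarrow> b < a \<Longrightarrow>
   fps_X ^ a * u a * u (a - b) = fps_X ^ b * u b * (u (a - b) - u a)"
proof -
  assume b: "b \<ge> 1" and ab: "b < a"
  define d where "d = a - b"
  have a: "a = d + b" and d: "d \<ge> 1" using ab by (auto simp: d_def)
  have h1: "qint a * u a = 1" using qu ab b by auto
  have h2: "qint b * u b = 1" using qu b by auto
  have h3: "qint d * u d = 1" using qu d by auto
  have h4: "qint a = qint d + fps_X ^ d * qint b" using qint_add[of d b] a by simp
  have h5: "(fps_X::rat fps) ^ a = fps_X ^ d * fps_X ^ b" using a by (simp add: power_add)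
  have "u d - u a = u d * u a * (qint a - qint d)"
    using h1 h3 by (simp add: algebra_simps)
  also have "\<dots> = u d * u a * (fps_X ^ d * qint b)" using h4 by simp
  finally have eq: "u d - u a = u d * u a * (fps_X ^ d * qint b)" .
  have "fps_X ^ b * u b * (u d - u a) = fps_X ^ b * u b * (u d * u a * (fps_X ^ d * qint b))"
    by (simp only: eq)
  also have "\<dots> = fps_X ^ b * fps_X ^ d * u d * u a * (qint b * u b)"
    by (simp add: algebra_simps)
  also have "\<dots> = fps_X ^ a * u a * u d" using h2 h5 by (simp add: algebra_simps)
  finally show ?thesis unfolding d_def[symmetric] by simp
qed


lemma core0: "b \<ge> 1 \<Longrightarrow> b < a \<Longrightarrow> u b * (u (a - b) - u a) = G (a - b) * u a"
proof -
  assume b: "b \<ge> 1" and ab: "b < a"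
  have a: "(fps_X::rat fps) ^ a = fps_X ^ b * fps_X ^ (a - b)" using ab by (simp add: power_add[symmetric])
  have "fps_X ^ b * (u b * (u (a - b) - u a)) = fps_X ^ b * (G (a - b) * u a)"
    using core[OF b ab] unfolding G_def a by (simp add: algebra_simps)
  thus ?thesis by simp
qed

lemma jsum: "k \<ge> 1 \<Longrightarrow> b \<ge> 1 \<Longrightarrow> b < a \<Longrightarrow>
  (\<Sum>j<k-1. ff (k-j) a * ff (j+1) b) = ff k b * (u (a-b) - u a) - G (a-b) * ff k a"
proof (induction k rule: nat_induct_at_least)
  case base
  have "ff 1 b = u b" "ff 1 a = u a" by (simp_all add: ff_def)
  thus ?case using core0[OF base(1,2)] by simp
next
  case (Suc k)
  note IH = Suc.IH[OF Suc.prems]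
  obtain k' where k: "k = Suc k'" using Suc.hyps by (cases k) auto
  have "(\<Sum>j<Suc k - 1. ff (Suc k - j) a * ff (j+1) b)
      = (\<Sum>j<k'. ff (Suc k - j) a * ff (j+1) b) + ff 2 a * ff k b"
    using k by (simp add: numeral_2_eq_2)
  also have "(\<Sum>j<k'. ff (Suc k - j) a * ff (j+1) b) = G a * (\<Sum>j<k-1. ff (k - j) a * ff (j+1) b)"
    unfolding sum_distrib_left using k
    by (intro sum.cong) (auto simp: ff_Suc Suc_diff_le)
  also have "ff 2 a = G a * u a" using ff_Suc[of 1 a] by (simp add: numeral_2_eq_2 ff_def)
  finally have L: "(\<Sum>j<Suc k - 1. ff (Suc k - j) a * ff (j+1) b)
     = G a * (ff k b * (u (a-b) - u a) - G (a-b) * ff k a) + G a * u a * ff k b"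
    using IH by simp
  have c: "G a * u (a - b) = G b * (u (a - b) - u a)"
    using core[OF Suc.prems(1,2)] unfolding G_def by (simp add: algebra_simps)
  have "G a * (ff k b * (u (a-b) - u a) - G (a-b) * ff k a) + G a * u a * ff k b
     = ff k b * (G a * u (a - b)) - G (a-b) * (G a * ff k a)" by (simp add: algebra_simps)
  also have "\<dots> = ff k b * (G b * (u (a - b) - u a)) - G (a-b) * (G a * ff k a)" using c by simp
  also have "\<dots> = ff (Suc k) b * (u (a-b) - u a) - G (a-b) * ff (Suc k) a"
    using ff_Suc[OF Suc.hyps] by (simp add: algebra_simps)
  finally show ?case using L by simp
qed

lemma jdiag: "(\<Sum>j<k-1. ff (k-j) a * ff (j+1) a) = of_nat (k - 1) * (fps_X ^ ((k-1)*a) * u a ^ (k+1))"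
proof -
  have "(\<Sum>j<k-1. ff (k-j) a * ff (j+1) a) = (\<Sum>j<k-1. fps_X ^ ((k-1)*a) * u a ^ (k+1))"
  proof (intro sum.cong refl)
    fix j assume "j \<in> {..<k-1}"
    hence j: "j < k - 1" by simp
    have e: "(k - j - 1) * a + j * a = (k - 1) * a" using j by (simp add: add_mult_distrib[symmetric])
    have e2: "k - j + (j + 1) = k + 1" using j by simp
    have "ff (k-j) a * ff (j+1) a = fps_X ^ ((k - j - 1) * a + j * a) * u a ^ (k - j + (j + 1))"
      unfolding ff_def power_add by (simp add: algebra_simps)
    thus "ff (k-j) a * ff (j+1) a = fps_X ^ ((k-1)*a) * u a ^ (k+1)" using e e2 by simp
  qed
  thus ?thesis by simp
qed


type_synonym R = "rat fps poly"

lemma C_mult: "[:x * y:] = [:x:] * ([:y:] :: 'a::comm_ring_1 poly)" by simp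
lemma C_add: "[:x + y:] = [:x:] + ([:y:] :: 'a::comm_ring_1 poly)" by simp
lemma C_diff: "[:x - y:] = [:x:] - ([:y:] :: 'a::comm_ring_1 poly)" by simp
lemma C_sum: "[:sum f A:] = (\<Sum>x\<in>A. [:f x:] :: 'a::comm_ring_1 poly)"
  by (induct A rule: infinite_finite_induct) (auto simp: C_add)
lemma C_pow: "[:x ^ n:] = ([:x:] :: 'a::comm_ring_1 poly) ^ n"
  by (induct n) (auto simp: C_mult)
lemma C_of_nat: "[:of_nat n:] = (of_nat n :: 'a::comm_ring_1 poly)"
  by (induct n) (auto simp: C_add)

definition Tt :: R where "Tt = [:0, 1:]"

definition boxw :: "nat \<Rightarrow> nat \<Rightarrow> R" where
  "boxw a b = (if b < a then 1 else if a = b then Tt else 0)"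

fun H :: "(nat \<Rightarrow> R) list \<Rightarrow> nat \<Rightarrow> nat \<Rightarrow> R" where
  "H [] a b = boxw a b"
| "H (w # ws) a b = (\<Sum>m\<le>a. boxw a m * w m * H ws m b)"

fun K :: "(nat \<Rightarrow> R) list \<Rightarrow> nat \<Rightarrow> nat \<Rightarrow> R" where
  "K [] c b = (if c = b then 1 else 0)"
| "K (w # ws) c b = w c * H ws c b"

lemma H_low: "a < b \<Longrightarrow> H ws a b = 0"
  by (induction ws arbitrary: a) (auto simp: boxw_def intro!: sum.neutral)

lemma K_low: "c < b \<Longrightarrow> K ws c b = 0"
  by (cases ws) (auto simp: H_low)

lemma H_diag: "H ws a a = Tt ^ Suc (length ws) * prod_list (map (\<lambda>w. w a) ws)"
proof (induction ws)
  case Nil thus ?case by (simp add: boxw_def)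
next
  case (Cons w ws)
  have "H (w # ws) a a = (\<Sum>m<Suc a. boxw a m * w m * H ws m a)"
    by (simp add: lessThan_Suc_atMost)
  also have "\<dots> = boxw a a * w a * H ws a a"
    by (simp add: H_low)
  finally show ?case using Cons by (simp add: boxw_def algebra_simps)
qed

lemma K_diag: "K ws c c = Tt ^ length ws * prod_list (map (\<lambda>w. w c) ws)"
  by (cases ws) (auto simp: H_diag algebra_simps)

lemma H_K: "H ws a b = (\<Sum>c\<le>a. boxw a c * K ws c b)"
proof (cases ws)
  case Nil
  have "(\<Sum>c\<le>a. boxw a c * K [] c b) = (if b \<le> a then boxw a b else 0)"
    by (auto simp: if_distrib cong: if_cong)
  thus ?thesis using Nil by (auto simp: boxw_def)
next
  case (Cons w ws') thus ?thesis by (simp add: algebra_simps)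
qed

lemma ext_range: "m \<le> a \<Longrightarrow> (\<Sum>b\<le>m. H ws m b * g b) = (\<Sum>b\<le>a. H ws m b * g b)"
  by (rule sum.mono_neutral_left) (auto simp: H_low)

lemma H_snoc: "H (ws @ [w]) a n = (\<Sum>b\<le>a. H ws a b * w b * boxw b n)"
proof (induction ws arbitrary: a)
  case Nil thus ?case by simp
next
  case (Cons v ws)
  have "H ((v # ws) @ [w]) a n = (\<Sum>m\<le>a. boxw a m * v m * (\<Sum>b\<le>m. H ws m b * (w b * boxw b n)))"
    using Cons by (simp add: mult.assoc)
  also have "\<dots> = (\<Sum>m\<le>a. boxw a m * v m * (\<Sum>b\<le>a. H ws m b * (w b * boxw b n)))"
  proof (intro sum.cong refl)
    fix m assume "m \<in> {..a}"
    hence "m \<le> a" by simp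
    from ext_range[OF this] show "boxw a m * v m * (\<Sum>b\<le>m. H ws m b * (w b * boxw b n))
       = boxw a m * v m * (\<Sum>b\<le>a. H ws m b * (w b * boxw b n))" by simp
  qed
  also have "\<dots> = (\<Sum>m\<le>a. \<Sum>b\<le>a. boxw a m * v m * H ws m b * (w b * boxw b n))"
    by (simp add: sum_distrib_left mult.assoc)
  also have "\<dots> = (\<Sum>b\<le>a. \<Sum>m\<le>a. boxw a m * v m * H ws m b * (w b * boxw b n))"
    by (rule sum.swap)
  also have "\<dots> = (\<Sum>b\<le>a. (\<Sum>m\<le>a. boxw a m * v m * H ws m b) * (w b * boxw b n))"
    by (simp add: sum_distrib_right)
  finally show ?case by (simp add: algebra_simps)
qed

lemma K_snoc: "K (ws @ [w]) c n = (\<Sum>b\<le>c. K ws c b * w b * boxw b n)"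
proof (cases ws)
  case Nil
  have "(\<Sum>b\<le>c. K [] c b * w b * boxw b n) = (\<Sum>b\<le>c. if b = c then w b * boxw b n else 0)"
    by (intro sum.cong) auto
  also have "\<dots> = w c * boxw c n" by simp
  finally have "(\<Sum>b\<le>c. K [] c b * w b * boxw b n) = w c * boxw c n" .
  thus ?thesis using Nil by simp
next
  case (Cons v ws')
  thus ?thesis by (simp add: H_snoc sum_distrib_left algebra_simps)
qed


lemma uG: "m \<ge> 1 \<Longrightarrow> u m = G m + (1 - fps_X)"
  using u_G unfolding G_def by simp

lemma tele0: "1 \<le> b \<Longrightarrow> b \<le> c \<Longrightarrow> c \<le> M \<Longrightarrow>
  (\<Sum>a\<in>{c<..M}. u (a - b) - u a) = (\<Sum>n<b. G (c - n) - G (M - n))"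
proof -
  assume b: "1 \<le> b" and bc: "b \<le> c" and cM: "c \<le> M"
  from cM show ?thesis
proof (induction M rule: dec_induct)
  case base thus ?case by simp
next
  case (step M)
  have "{c<..Suc M} = insert (Suc M) {c<..M}" using step by auto
  hence "(\<Sum>a\<in>{c<..Suc M}. u (a - b) - u a) = (u (Suc M - b) - u (Suc M)) + (\<Sum>a\<in>{c<..M}. u (a - b) - u a)"
    by simp
  also have "u (Suc M - b) - u (Suc M) = G (Suc M - b) - G (Suc M)"
    using uG[of "Suc M - b"] uG[of "Suc M"] step b bc by auto
  also have "G (Suc M - b) - G (Suc M) = (\<Sum>n<b. G (M - n) - G (Suc M - n))"
  proof -
    have "(\<Sum>n<b. G (M - n) - G (Suc M - n)) = (\<Sum>n<b. G (Suc M - Suc n) - G (Suc M - n))" by simp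
    also have "\<dots> = G (Suc M - b) - G (Suc M - 0)"
      by (rule sum_lessThan_telescope)
    finally show ?thesis by simp
  qed
  finally show ?case using step by (simp add: sum_subtractf)
qed
qed

lemma boxw_split: "boxw a c = (if c < a then 1 else 0) + (if a = c then Tt else 0)"
  by (auto simp: boxw_def)

lemma tele: "1 \<le> b \<Longrightarrow> b \<le> c \<Longrightarrow> c \<le> M \<Longrightarrow>
  (\<Sum>a\<in>{b<..M}. boxw a c * [:u (a - b) - u a:])
   = (\<Sum>n<c. boxw b n * [:G (c - n):]) - (if b < c then Tt * [:G c:] else 0) - [:\<Sum>n<b. G (M - n):]"
proof -
  assume b: "1 \<le> b" and bc: "b \<le> c" and cM: "c \<le> M"
  have L1: "(\<Sum>a\<in>{b<..M}. boxw a c * [:u (a - b) - u a:])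
     = (\<Sum>a\<in>{b<..M}. if c < a then [:u (a - b) - u a:] else 0)
     + (\<Sum>a\<in>{b<..M}. if a = c then Tt * [:u (a - b) - u a:] else 0)"
    by (subst sum.distrib[symmetric], rule sum.cong) (auto simp: boxw_def)
  have L2: "(\<Sum>a\<in>{b<..M}. if c < a then [:u (a - b) - u a:] else 0) = (\<Sum>a\<in>{c<..M}. [:u (a - b) - u a:])"
    by (subst sum.inter_filter[symmetric]) (use bc in \<open>auto intro!: sum.cong\<close>)
  have L3: "(\<Sum>a\<in>{b<..M}. if a = c then Tt * [:u (a - b) - u a:] else 0)
       = (if b < c then Tt * [:u (c - b) - u c:] else 0)"
    using cM by (subst sum.delta) auto
  have R1: "(\<Sum>n<c. boxw b n * [:G (c - n):]) = (\<Sum>n<c. if n < b then [:G (c - n):] else 0)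
      + (\<Sum>n<c. if b = n then Tt * [:G (c - n):] else 0)"
    by (subst sum.distrib[symmetric], rule sum.cong) (auto simp: boxw_def)
  have R2: "(\<Sum>n<c. if n < b then [:G (c - n):] else 0) = (\<Sum>n<b. [:G (c - n):])"
    by (subst sum.inter_filter[symmetric]) (use bc in \<open>auto intro!: sum.cong\<close>)
  have R3: "(\<Sum>n<c. if b = n then Tt * [:G (c - n):] else 0) = (if b < c then Tt * [:G (c - b):] else 0)"
    by (subst sum.delta') auto
  have T0: "(\<Sum>a\<in>{c<..M}. [:u (a - b) - u a:]) = (\<Sum>n<b. [:G (c - n):]) - [:\<Sum>n<b. G (M - n):]"
    using tele0[OF b bc cM] by (simp add: C_sum[symmetric] sum_subtractf)
  have T1: "b < c \<Longrightarrow> u (c - b) - u c = G (c - b) - G c"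
    using uG[of "c - b"] uG[of c] b by auto
  show ?thesis
  proof (cases "b < c")
    case True
    then have e: "[:u (c - b) - u c:] = [:G (c-b):] - [:G c:]" using T1 by simp
    have "(\<Sum>a\<in>{b<..M}. boxw a c * [:u (a - b) - u a:]) =
       (\<Sum>n<b. [:G (c - n):]) - [:\<Sum>n<b. G (M - n):] + Tt * ([:G (c-b):] - [:G c:])"
      using L1 L2 L3 T0 True cM e by simp
    moreover have "(\<Sum>n<c. boxw b n * [:G (c - n):]) = (\<Sum>n<b. [:G (c - n):]) + Tt * [:G (c - b):]"
      using R1 R2 R3 True by simp
    moreover have "smult (G c) Tt + smult (G (c-b) - G c) Tt = smult (G (c-b)) Tt"
      by (subst smult_add_left[symmetric]) simp
    ultimately show ?thesis using True
      by (simp add: algebra_simps)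
  next
    case False
    have "(\<Sum>a\<in>{b<..M}. boxw a c * [:u (a - b) - u a:]) =
       (\<Sum>n<b. [:G (c - n):]) - [:\<Sum>n<b. G (M - n):]"
      using L1 L2 L3 T0 False by simp
    moreover have "(\<Sum>n<c. boxw b n * [:G (c - n):]) = (\<Sum>n<b. [:G (c - n):])"
      using R1 R2 R3 False by simp
    ultimately show ?thesis using False by (simp add: algebra_simps)
  qed
qed


definition F :: "nat \<Rightarrow> nat \<Rightarrow> R" where "F k m = [:ff k m:]"

lemma F0: "k \<ge> 1 \<Longrightarrow> F k 0 = 0" by (simp add: F_def ff_0)

definition TC :: "nat list \<Rightarrow> nat \<Rightarrow> R" where
  "TC ks M = (case ks of [] \<Rightarrow> 1 | k # ks' \<Rightarrow> (\<Sum>a\<in>{1..M}. F k a * H (map F ks') a 0))"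

definition Tq :: "(nat \<Rightarrow> R) list \<Rightarrow> nat \<Rightarrow> R" where
  "Tq ws M = (\<Sum>c\<in>{1..M}. \<Sum>n<c. [:G (c - n):] * K ws c n)"

definition TCp :: "(nat \<Rightarrow> R) list \<Rightarrow> nat \<Rightarrow> R" where
  "TCp ws M = (\<Sum>c\<in>{1..M}. [:G c:] * K ws c 0)"

lemma boxw_0: "b \<ge> 1 \<Longrightarrow> boxw b 0 = 1" by (simp add: boxw_def)

lemma sum_to_M:
  assumes "a \<le> M" "g 0 = 0" "\<And>b. a < b \<Longrightarrow> g b = 0"
  shows "(\<Sum>b\<le>a. g b * boxw b 0) = (\<Sum>b\<in>{1..M}. g b)"
proof -
  have "(\<Sum>b\<le>a. g b * boxw b 0) = (\<Sum>b\<in>{1..a}. g b * boxw b 0)"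
    by (rule sum.mono_neutral_right) (use assms in \<open>auto simp: not_less_eq_eq\<close>)
  also have "\<dots> = (\<Sum>b\<in>{1..a}. g b)" by (intro sum.cong) (auto simp: boxw_0)
  also have "\<dots> = (\<Sum>b\<in>{1..M}. g b)"
    by (rule sum.mono_neutral_left) (use assms in auto)
  finally show ?thesis .
qed

lemma TC_split: "k' \<ge> 1 \<Longrightarrow> TC (k # mid @ [k']) M
   = (\<Sum>a\<in>{1..M}. \<Sum>b\<in>{1..M}. H (map F mid) a b * (F k a * F k' b))"
proof -
  assume k': "k' \<ge> 1"
  have "TC (k # mid @ [k']) M = (\<Sum>a\<in>{1..M}. F k a * H (map F mid @ [F k']) a 0)"
    by (simp add: TC_def)
  also have "\<dots> = (\<Sum>a\<in>{1..M}. \<Sum>b\<in>{1..M}. H (map F mid) a b * (F k a * F k' b))"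
  proof (intro sum.cong refl)
    fix a assume "a \<in> {1..M}"
    hence aM: "a \<le> M" by simp
    have "H (map F mid @ [F k']) a 0 = (\<Sum>b\<le>a. (H (map F mid) a b * F k' b) * boxw b 0)"
      by (simp add: H_snoc)
    also have "\<dots> = (\<Sum>b\<in>{1..M}. H (map F mid) a b * F k' b)"
      by (rule sum_to_M) (use aM k' in \<open>auto simp: F0 H_low\<close>)
    finally show "F k a * H (map F mid @ [F k']) a 0 = (\<Sum>b\<in>{1..M}. H (map F mid) a b * (F k a * F k' b))"
      by (simp add: sum_distrib_left algebra_simps)
  qed
  finally show ?thesis .
qed


lemma FF: "F x a * F y b = [:ff x a * ff y b:]" by (simp add: F_def)

lemma stepA: "(\<Sum>j<k-1. TC ((k-j) # mid @ [j+1]) M)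
  = (\<Sum>a\<in>{1..M}. \<Sum>b\<in>{1..M}. H (map F mid) a b * [:\<Sum>j<k-1. ff (k-j) a * ff (j+1) b:])"
proof -
  have "(\<Sum>j<k-1. TC ((k-j) # mid @ [j+1]) M)
     = (\<Sum>j<k-1. \<Sum>a\<in>{1..M}. \<Sum>b\<in>{1..M}. H (map F mid) a b * (F (k-j) a * F (j+1) b))"
    by (intro sum.cong refl TC_split) simp
  also have "\<dots> = (\<Sum>a\<in>{1..M}. \<Sum>j<k-1. \<Sum>b\<in>{1..M}. H (map F mid) a b * (F (k-j) a * F (j+1) b))"
    by (rule sum.swap)
  also have "\<dots> = (\<Sum>a\<in>{1..M}. \<Sum>b\<in>{1..M}. \<Sum>j<k-1. H (map F mid) a b * (F (k-j) a * F (j+1) b))"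
    by (intro sum.cong refl sum.swap)
  also have "\<dots> = (\<Sum>a\<in>{1..M}. \<Sum>b\<in>{1..M}. H (map F mid) a b * [:\<Sum>j<k-1. ff (k-j) a * ff (j+1) b:])"
    by (simp add: sum_distrib_left C_sum FF)
  finally show ?thesis .
qed

lemma stepB: fixes g :: "nat \<Rightarrow> nat \<Rightarrow> R" shows
  "(\<Sum>a\<in>{1..M}. \<Sum>b\<in>{1..M}. H ws a b * g a b)
  = (\<Sum>a\<in>{1..M}. H ws a a * g a a) + (\<Sum>a\<in>{1..M}. \<Sum>b\<in>{1..M}. if b < a then H ws a b * g a b else 0)"
proof -
  have "(\<Sum>b\<in>{1..M}. H ws a b * g a b) = H ws a a * g a a + (\<Sum>b\<in>{1..M}. if b < a then H ws a b * g a b else 0)"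
    if a: "a \<in> {1..M}" for a
  proof -
    have "(\<Sum>b\<in>{1..M}. H ws a b * g a b) = (\<Sum>b\<in>{1..M}. (if b = a then H ws a b * g a b else 0) + (if b < a then H ws a b * g a b else 0))"
      by (intro sum.cong refl) (auto simp: H_low)
    also have "\<dots> = H ws a a * g a a + (\<Sum>b\<in>{1..M}. if b < a then H ws a b * g a b else 0)"
      using a by (simp add: sum.distrib sum.delta)
    finally show ?thesis .
  qed
  thus ?thesis by (simp add: sum.distrib)
qed

lemma stepD: "k \<ge> 1 \<Longrightarrow> (\<Sum>a\<in>{1..M}. \<Sum>b\<in>{1..M}. if b < a then H (map F mid) a b * ([:G (a-b):] * F k a) else 0)
   = Tq (map F (k # mid)) M - TCp (map F (k # mid)) M"
proof -
  have "Tq (map F (k # mid)) M = (\<Sum>c\<in>{1..M}. [:G c:] * K (map F (k#mid)) c 0 +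
       (\<Sum>b\<in>{1..M}. if b < c then H (map F mid) c b * ([:G (c-b):] * F k c) else 0))"
    unfolding Tq_def
  proof (intro sum.cong refl)
    fix c assume c: "c \<in> {1..M}"
    have e: "{..<c} = insert 0 {1..<c}" using c by auto
    have "(\<Sum>n<c. [:G (c - n):] * K (map F (k # mid)) c n) = [:G c:] * K (map F (k#mid)) c 0
       + (\<Sum>n\<in>{1..<c}. [:G (c - n):] * K (map F (k # mid)) c n)"
      unfolding e by simp
    also have "(\<Sum>n\<in>{1..<c}. [:G (c - n):] * K (map F (k # mid)) c n)
        = (\<Sum>b\<in>{1..M}. if b < c then H (map F mid) c b * ([:G (c-b):] * F k c) else 0)"
      by (subst sum.inter_filter[symmetric]) (use c in \<open>auto intro!: sum.cong simp: algebra_simps\<close>)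
    finally show "(\<Sum>n<c. [:G (c - n):] * K (map F (k # mid)) c n) = [:G c:] * K (map F (k#mid)) c 0 +
       (\<Sum>b\<in>{1..M}. if b < c then H (map F mid) c b * ([:G (c-b):] * F k c) else 0)" .
  qed
  thus "?thesis" by (simp add: TCp_def sum.distrib)
qed


lemma smult_sum_right[simp]: "smult a (sum f S) = (\<Sum>x\<in>S. smult a (f x))"
  by (induct S rule: infinite_finite_induct) (auto simp: smult_add_right)

lemma E1: "1 \<le> b \<Longrightarrow> a \<le> M \<Longrightarrow> H ws a b = (\<Sum>c\<in>{1..M}. boxw a c * K ws c b)"
proof -
  assume b: "1 \<le> b" and a: "a \<le> M"
  have "H ws a b = (\<Sum>c\<le>a. boxw a c * K ws c b)" by (rule H_K)
  also have "\<dots> = (\<Sum>c\<in>{1..a}. boxw a c * K ws c b)"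
    by (rule sum.mono_neutral_right) (use b in \<open>auto simp: K_low not_less_eq_eq\<close>)
  also have "\<dots> = (\<Sum>c\<in>{1..M}. boxw a c * K ws c b)"
    by (rule sum.mono_neutral_left) (use a in \<open>auto simp: boxw_def\<close>)
  finally show ?thesis .
qed

lemma E2: fixes g :: "nat \<Rightarrow> nat \<Rightarrow> R" shows
  "(\<Sum>a\<in>{1..M}. \<Sum>b\<in>{1..M}. if b < a then H ws a b * (F k b * g a b) else 0)
   = (\<Sum>b\<in>{1..M}. \<Sum>c\<in>{1..M}. K ws c b * F k b * (\<Sum>a\<in>{b<..M}. boxw a c * g a b))"
proof -
  have "(\<Sum>a\<in>{1..M}. \<Sum>b\<in>{1..M}. if b < a then H ws a b * (F k b * g a b) else 0)
     = (\<Sum>a\<in>{1..M}. \<Sum>b\<in>{1..M}. \<Sum>c\<in>{1..M}. if b < a then boxw a c * K ws c b * (F k b * g a b) else 0)"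
    by (intro sum.cong refl) (auto simp: E1 sum_distrib_right)
  also have "\<dots> = (\<Sum>b\<in>{1..M}. \<Sum>a\<in>{1..M}. \<Sum>c\<in>{1..M}. if b < a then boxw a c * K ws c b * (F k b * g a b) else 0)"
    by (rule sum.swap)
  also have "\<dots> = (\<Sum>b\<in>{1..M}. \<Sum>c\<in>{1..M}. \<Sum>a\<in>{1..M}. if b < a then boxw a c * K ws c b * (F k b * g a b) else 0)"
    by (intro sum.cong refl sum.swap)
  also have "\<dots> = (\<Sum>b\<in>{1..M}. \<Sum>c\<in>{1..M}. K ws c b * F k b * (\<Sum>a\<in>{b<..M}. boxw a c * g a b))"
  proof (intro sum.cong refl)
    fix b c assume b: "b \<in> {1..M}"
    have "(\<Sum>a\<in>{1..M}. if b < a then boxw a c * K ws c b * (F k b * g a b) else 0)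
        = (\<Sum>a\<in>{b<..M}. boxw a c * K ws c b * (F k b * g a b))"
      by (subst sum.inter_filter[symmetric]) (use b in \<open>auto intro!: sum.cong\<close>)
    thus "(\<Sum>a\<in>{1..M}. if b < a then boxw a c * K ws c b * (F k b * g a b) else 0)
        = K ws c b * F k b * (\<Sum>a\<in>{b<..M}. boxw a c * g a b)"
      by (simp add: sum_distrib_left algebra_simps)
  qed
  finally show ?thesis .
qed

lemma E3: "(\<Sum>b\<in>{1..M}. \<Sum>c\<in>{1..M}. K ws c b * F k b * (\<Sum>a\<in>{b<..M}. boxw a c * [:u (a - b) - u a:]))
   = (\<Sum>b\<in>{1..M}. \<Sum>c\<in>{1..M}. K ws c b * F k b * ((\<Sum>n<c. boxw b n * [:G (c - n):])
        - (if b < c then Tt * [:G c:] else 0) - [:\<Sum>n<b. G (M - n):]))"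
proof (intro sum.cong refl)
  fix b c assume b: "b \<in> {1..M}" and c: "c \<in> {1..M}"
  show "K ws c b * F k b * (\<Sum>a\<in>{b<..M}. boxw a c * [:u (a - b) - u a:]) =
         K ws c b * F k b * ((\<Sum>n<c. boxw b n * [:G (c - n):])
        - (if b < c then Tt * [:G c:] else 0) - [:\<Sum>n<b. G (M - n):])"
  proof (cases "c < b")
    case True thus ?thesis by (simp add: K_low)
  next
    case False
    thus ?thesis using tele[of b c M] b c by simp
  qed
qed

definition Dg :: "nat list \<Rightarrow> nat \<Rightarrow> nat \<Rightarrow> R" where
  "Dg mid k M = (\<Sum>c\<in>{1..M}. [:G c:] * K (map F mid) c c * F k c)"

definition Err :: "nat list \<Rightarrow> nat \<Rightarrow> nat \<Rightarrow> R" where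
  "Err mid k M = (\<Sum>b\<in>{1..M}. \<Sum>c\<in>{1..M}. K (map F mid) c b * F k b * [:\<Sum>n<b. G (M - n):])"

lemma Ksnoc_M: "k \<ge> 1 \<Longrightarrow> c \<le> M \<Longrightarrow> K (ws @ [F k]) c n = (\<Sum>b\<in>{1..M}. K ws c b * F k b * boxw b n)"
proof -
  assume k: "k \<ge> 1" and c: "c \<le> M"
  have "K (ws @ [F k]) c n = (\<Sum>b\<le>c. K ws c b * F k b * boxw b n)" by (rule K_snoc)
  also have "\<dots> = (\<Sum>b\<in>{1..c}. K ws c b * F k b * boxw b n)"
    by (rule sum.mono_neutral_right) (use k in \<open>auto simp: F0 not_less_eq_eq\<close>)
  also have "\<dots> = (\<Sum>b\<in>{1..M}. K ws c b * F k b * boxw b n)"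
    by (rule sum.mono_neutral_left) (use c in \<open>auto simp: K_low\<close>)
  finally show ?thesis .
qed

lemma E4A: "k \<ge> 1 \<Longrightarrow> (\<Sum>b\<in>{1..M}. \<Sum>c\<in>{1..M}. K ws c b * F k b * (\<Sum>n<c. boxw b n * [:G (c - n):]))
   = Tq (ws @ [F k]) M"
proof -
  assume k: "k \<ge> 1"
  have "(\<Sum>b\<in>{1..M}. \<Sum>c\<in>{1..M}. K ws c b * F k b * (\<Sum>n<c. boxw b n * [:G (c - n):]))
     = (\<Sum>c\<in>{1..M}. \<Sum>b\<in>{1..M}. \<Sum>n<c. K ws c b * F k b * boxw b n * [:G (c - n):])"
    by (subst sum.swap) (simp add: sum_distrib_left mult.assoc)
  also have "\<dots> = (\<Sum>c\<in>{1..M}. \<Sum>n<c. \<Sum>b\<in>{1..M}. K ws c b * F k b * boxw b n * [:G (c - n):])"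
    by (intro sum.cong refl sum.swap)
  also have "\<dots> = Tq (ws @ [F k]) M"
    unfolding Tq_def
  proof (intro sum.cong refl)
    fix c n assume "c \<in> {1..M}"
    hence "c \<le> M" by simp
    thus "(\<Sum>b\<in>{1..M}. K ws c b * F k b * boxw b n * [:G (c - n):]) = [:G (c - n):] * K (ws @ [F k]) c n"
      using Ksnoc_M[OF k] by (simp add: sum_distrib_right algebra_simps)
  qed
  finally show ?thesis .
qed

lemma E4B: "k \<ge> 1 \<Longrightarrow> (\<Sum>b\<in>{1..M}. \<Sum>c\<in>{1..M}. K (map F mid) c b * F k b * (if b < c then Tt * [:G c:] else 0))
   = Tt * (TCp (map F (mid @ [k])) M - Dg mid k M)"
proof -
  assume k: "k \<ge> 1"
  have "(\<Sum>b\<in>{1..M}. \<Sum>c\<in>{1..M}. K (map F mid) c b * F k b * (if b < c then Tt * [:G c:] else 0))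
    = (\<Sum>c\<in>{1..M}. \<Sum>b\<in>{1..M}. K (map F mid) c b * F k b * (if b < c then Tt * [:G c:] else 0))"
    by (rule sum.swap)
  also have "\<dots> = Tt * (\<Sum>c\<in>{1..M}. [:G c:] * (\<Sum>b\<in>{1..M}. if b < c then K (map F mid) c b * F k b else 0))"
    by (simp add: sum_distrib_left algebra_simps if_distrib cong: if_cong)
  also have "\<dots> = Tt * (TCp (map F (mid @ [k])) M - Dg mid k M)"
  proof -
    have "(\<Sum>b\<in>{1..M}. if b < c then K (map F mid) c b * F k b else 0)
        = K (map F mid @ [F k]) c 0 - K (map F mid) c c * F k c" if c: "c \<in> {1..M}" for c
    proof -
      have "K (map F mid @ [F k]) c 0 = (\<Sum>b\<in>{1..M}. K (map F mid) c b * F k b)"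
        using Ksnoc_M[OF k, of c M "map F mid" 0] c by (simp add: boxw_0)
      also have "\<dots> = (\<Sum>b\<in>{1..M}. (if b < c then K (map F mid) c b * F k b else 0) +
                          (if b = c then K (map F mid) c b * F k b else 0))"
        by (intro sum.cong refl) (auto simp: K_low)
      also have "\<dots> = (\<Sum>b\<in>{1..M}. if b < c then K (map F mid) c b * F k b else 0) + K (map F mid) c c * F k c"
        using c by (simp add: sum.distrib sum.delta)
      finally show ?thesis by simp
    qed
    note hh = this
    have "(\<Sum>c\<in>{1..M}. [:G c:] * (\<Sum>b\<in>{1..M}. if b < c then K (map F mid) c b * F k b else 0))
       = (\<Sum>c\<in>{1..M}. [:G c:] * K (map F mid @ [F k]) c 0 - [:G c:] * K (map F mid) c c * F k c)"
    proof (intro sum.cong refl)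
      fix c assume c: "c \<in> {1..M}"
      show "[:G c:] * (\<Sum>b\<in>{1..M}. if b < c then K (map F mid) c b * F k b else 0) =
         [:G c:] * K (map F mid @ [F k]) c 0 - [:G c:] * K (map F mid) c c * F k c"
        by (subst hh[OF c]) (simp add: algebra_simps)
    qed
    also have "\<dots> = TCp (map F (mid @ [k])) M - Dg mid k M"
      by (simp add: TCp_def Dg_def sum_subtractf)
    finally show ?thesis by simp
  qed
  finally show ?thesis .
qed

lemma stepE: "k \<ge> 1 \<Longrightarrow>
  (\<Sum>a\<in>{1..M}. \<Sum>b\<in>{1..M}. if b < a then H (map F mid) a b * (F k b * [:u (a - b) - u a:]) else 0)
  = Tq (map F (mid @ [k])) M - Tt * (TCp (map F (mid @ [k])) M - Dg mid k M) - Err mid k M"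
proof -
  assume k: "k \<ge> 1"
  have "(\<Sum>a\<in>{1..M}. \<Sum>b\<in>{1..M}. if b < a then H (map F mid) a b * (F k b * [:u (a - b) - u a:]) else 0)
   = (\<Sum>b\<in>{1..M}. \<Sum>c\<in>{1..M}. K (map F mid) c b * F k b * ((\<Sum>n<c. boxw b n * [:G (c - n):])
        - (if b < c then Tt * [:G c:] else 0) - [:\<Sum>n<b. G (M - n):]))"
    using E2[where M=M and ws="map F mid" and k=k and g="\<lambda>a b. [:u (a - b) - u a:]"] E3 by simp
  also have "\<dots> = (\<Sum>b\<in>{1..M}. \<Sum>c\<in>{1..M}. K (map F mid) c b * F k b * (\<Sum>n<c. boxw b n * [:G (c - n):]))
      - (\<Sum>b\<in>{1..M}. \<Sum>c\<in>{1..M}. K (map F mid) c b * F k b * (if b < c then Tt * [:G c:] else 0))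
      - Err mid k M"
    by (simp add: Err_def right_diff_distrib sum_subtractf)
  also have "\<dots> = Tq (map F (mid @ [k])) M - Tt * (TCp (map F (mid @ [k])) M - Dg mid k M) - Err mid k M"
    using E4A[OF k, where ws="map F mid" and M=M] E4B[OF k, where mid=mid and M=M] by simp
  finally show ?thesis .
qed


definition Diag :: "nat list \<Rightarrow> nat \<Rightarrow> nat \<Rightarrow> R" where
  "Diag mid k M = (\<Sum>a\<in>{1..M}. H (map F mid) a a * [:of_nat (k-1) * (fps_X ^ ((k-1)*a) * u a ^ (k+1)):])"

lemma rot_identity: "k \<ge> 1 \<Longrightarrow> (\<Sum>j<k-1. TC ((k-j) # mid @ [j+1]) M)
  = Diag mid k M + Tq (map F (mid @ [k])) M - Tt * (TCp (map F (mid @ [k])) M - Dg mid k M) - Err mid k M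
    - Tq (map F (k # mid)) M + TCp (map F (k # mid)) M"
proof -
  assume k: "k \<ge> 1"
  let ?h = "H (map F mid)"
  let ?J = "\<lambda>a b. [:\<Sum>j<k-1. ff (k-j) a * ff (j+1) b:]"
  have A: "(\<Sum>j<k-1. TC ((k-j) # mid @ [j+1]) M) = (\<Sum>a\<in>{1..M}. \<Sum>b\<in>{1..M}. ?h a b * ?J a b)"
    by (rule stepA)
  have B: "(\<Sum>a\<in>{1..M}. \<Sum>b\<in>{1..M}. ?h a b * ?J a b) = (\<Sum>a\<in>{1..M}. ?h a a * ?J a a)
     + (\<Sum>a\<in>{1..M}. \<Sum>b\<in>{1..M}. if b < a then ?h a b * ?J a b else 0)"
    by (rule stepB)
  have Dd: "(\<Sum>a\<in>{1..M}. ?h a a * ?J a a) = Diag mid k M"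
    unfolding Diag_def jdiag by simp
  have off: "(\<Sum>a\<in>{1..M}. \<Sum>b\<in>{1..M}. if b < a then ?h a b * ?J a b else 0)
     = (\<Sum>a\<in>{1..M}. \<Sum>b\<in>{1..M}. if b < a then ?h a b * (F k b * [:u (a - b) - u a:]) else 0)
     - (\<Sum>a\<in>{1..M}. \<Sum>b\<in>{1..M}. if b < a then ?h a b * ([:G (a-b):] * F k a) else 0)"
  proof -
    have "(\<Sum>a\<in>{1..M}. \<Sum>b\<in>{1..M}. if b < a then ?h a b * ?J a b else 0)
     = (\<Sum>a\<in>{1..M}. \<Sum>b\<in>{1..M}. (if b < a then ?h a b * (F k b * [:u (a - b) - u a:]) else 0)
          - (if b < a then ?h a b * ([:G (a-b):] * F k a) else 0))"
    proof (intro sum.cong refl)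
      fix a b assume a: "a \<in> {1..M}" and b: "b \<in> {1..M}"
      show "(if b < a then ?h a b * ?J a b else 0) = (if b < a then ?h a b * (F k b * [:u (a - b) - u a:]) else 0)
          - (if b < a then ?h a b * ([:G (a-b):] * F k a) else 0)"
      proof (cases "b < a")
        case True
        have eq: "?J a b = F k b * [:u (a - b) - u a:] - [:G (a-b):] * F k a"
          using jsum[OF k _ True] b by (simp add: F_def)
        show ?thesis using True by (simp only: eq if_True right_diff_distrib)
      qed simp
    qed
    thus ?thesis by (simp add: sum_subtractf)
  qed
  show ?thesis
    unfolding A B Dd off stepE[OF k] stepD[OF k] by (simp add: algebra_simps)
qed


definition sdef :: "nat list \<Rightarrow> nat" where "sdef ks = sum_list (map (\<lambda>x. x - 1) ks)"

lemma C_dvd: "(x::rat fps) dvd y \<Longrightarrow> [:x:] dvd [:y:]"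
  by (metis C_mult dvd_def)

lemma Xpow_dvd: "e \<le> e' \<Longrightarrow> [:(fps_X::rat fps) ^ e:] dvd [:fps_X ^ e':]"
  by (intro C_dvd le_imp_power_dvd)

lemma F_dvd: "b \<le> m \<Longrightarrow> [:fps_X ^ ((k - 1) * b):] dvd F k m"
proof -
  assume "b \<le> m"
  have "[:(fps_X::rat fps) ^ ((k - 1) * b):] dvd [:fps_X ^ ((k - 1) * m):]"
    by (rule Xpow_dvd) (use \<open>b \<le> m\<close> in simp)
  thus ?thesis unfolding F_def ff_def by (metis C_mult dvd_mult2)
qed

lemma C_Xadd: "[:(fps_X::rat fps) ^ (e1 + e2):] = [:fps_X ^ e1:] * [:fps_X ^ e2:]"
  by (simp add: power_add)

lemma H_dvd: "[:fps_X ^ (sdef ks * b):] dvd H (map F ks) a b"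
proof (induction ks arbitrary: a)
  case Nil thus ?case by (simp add: sdef_def one_pCons[symmetric])
next
  case (Cons k ks)
  show ?case
  proof (simp, intro dvd_sum)
    fix m assume "m \<in> {..a}"
    show "[:fps_X ^ (sdef (k # ks) * b):] dvd boxw a m * F k m * H (map F ks) m b"
    proof (cases "m < b")
      case True thus ?thesis by (simp add: H_low)
    next
      case False
      have "sdef (k # ks) * b = (k - 1) * b + sdef ks * b" by (simp add: sdef_def algebra_simps)
      hence e: "[:(fps_X::rat fps) ^ (sdef (k # ks) * b):] = [:fps_X ^ ((k - 1) * b):] * [:fps_X ^ (sdef ks * b):]"
        by (simp add: C_Xadd)
      have "[:fps_X ^ ((k - 1) * b):] * [:fps_X ^ (sdef ks * b):] dvd F k m * H (map F ks) m b"
        using F_dvd[of b m k] False Cons.IH by (intro mult_dvd_mono) auto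
      thus ?thesis unfolding e by (metis dvd_mult2 mult.assoc mult.commute)
    qed
  qed
qed

lemma K_dvd: "[:fps_X ^ (sdef ks * b):] dvd K (map F ks) c b"
proof (cases ks)
  case Nil thus ?thesis by (simp add: sdef_def one_pCons[symmetric])
next
  case (Cons k ks')
  show ?thesis
  proof (cases "c < b")
    case True thus ?thesis by (simp add: K_low)
  next
    case False
    have "sdef (k # ks') * b = (k - 1) * b + sdef ks' * b" by (simp add: sdef_def algebra_simps)
    hence e: "[:(fps_X::rat fps) ^ (sdef (k # ks') * b):] = [:fps_X ^ ((k - 1) * b):] * [:fps_X ^ (sdef ks' * b):]"
      by (simp add: C_Xadd)
    have "[:fps_X ^ ((k - 1) * b):] * [:fps_X ^ (sdef ks' * b):] dvd F k c * H (map F ks') c b"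
      using F_dvd[of b c k] False H_dvd[of ks' b c] by (intro mult_dvd_mono) auto
    hence "[:fps_X ^ (sdef (k # ks') * b):] dvd F k c * H (map F ks') c b" unfolding e .
    thus ?thesis using Cons by simp
  qed
qed

lemma Err_dvd: "sdef mid + (k - 1) \<ge> 1 \<Longrightarrow> [:fps_X ^ Suc M:] dvd Err mid k M"
proof -
  assume s: "sdef mid + (k - 1) \<ge> 1"
  show ?thesis unfolding Err_def
  proof (intro dvd_sum)
    fix b c assume b: "b \<in> {1..M}" and c: "c \<in> {1..M}"
    have E: "[:fps_X ^ (Suc M - b):] dvd [:\<Sum>n<b. G (M - n):]"
      unfolding C_sum
    proof (intro dvd_sum)
      fix n assume "n \<in> {..<b}"
      hence "Suc M - b \<le> M - n" using b by auto
      hence "[:(fps_X::rat fps) ^ (Suc M - b):] dvd [:fps_X ^ (M - n):]" by (rule Xpow_dvd)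
      thus "[:fps_X ^ (Suc M - b):] dvd [:G (M - n):]" unfolding G_def by (metis C_mult dvd_mult2)
    qed
    have "[:fps_X ^ (sdef mid * b):] * [:fps_X ^ ((k - 1) * b):] * [:fps_X ^ (Suc M - b):]
       dvd K (map F mid) c b * F k b * [:\<Sum>n<b. G (M - n):]"
      by (intro mult_dvd_mono K_dvd F_dvd E) simp
    moreover have "[:(fps_X::rat fps) ^ Suc M:] dvd [:fps_X ^ (sdef mid * b):] * [:fps_X ^ ((k - 1) * b):] * [:fps_X ^ (Suc M - b):]"
    proof -
      have "Suc M \<le> sdef mid * b + (k - 1) * b + (Suc M - b)"
      proof -
        have "b \<le> (sdef mid + (k - 1)) * b" using s by simp
        thus ?thesis using b by (simp add: algebra_simps)
      qed
      thus ?thesis unfolding C_Xadd[symmetric] by (rule Xpow_dvd)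
    qed
    ultimately show "[:fps_X ^ Suc M:] dvd K (map F mid) c b * F k b * [:\<Sum>n<b. G (M - n):]"
      using dvd_trans by blast
  qed
qed


lemma binom_i: "(\<Sum>i\<le>l. of_nat i * of_nat (l choose i) * Y ^ i * Z ^ (l - i))
   = of_nat l * Y * (Y + Z) ^ (l - 1 :: nat)" (is "?L l = _")
  for Y Z :: "'a::comm_ring_1"
proof (cases l)
  case 0 thus ?thesis by simp
next
  case (Suc m)
  have "?L (Suc m) = (\<Sum>i\<le>m. of_nat (Suc i) * of_nat (Suc m choose Suc i) * Y ^ Suc i * Z ^ (Suc m - Suc i))"
    by (subst sum.atMost_Suc_shift) simp
  also have "\<dots> = (\<Sum>i\<le>m. of_nat (Suc m) * Y * (of_nat (m choose i) * Y ^ i * Z ^ (m - i)))"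
  proof (intro sum.cong refl)
    fix i assume "i \<in> {..m}"
    have "Suc i * (Suc m choose Suc i) = Suc m * (m choose i)" by (rule Suc_times_binomial)
    hence "(of_nat (Suc i) :: 'a) * of_nat (Suc m choose Suc i) = of_nat (Suc m) * of_nat (m choose i)"
      by (metis of_nat_mult)
    thus "of_nat (Suc i) * of_nat (Suc m choose Suc i) * Y ^ Suc i * Z ^ (Suc m - Suc i)
        = of_nat (Suc m) * Y * (of_nat (m choose i) * Y ^ i * Z ^ (m - i))"
      by (simp add: algebra_simps)
  qed
  also have "\<dots> = of_nat (Suc m) * Y * (\<Sum>i\<le>m. of_nat (m choose i) * Y ^ i * Z ^ (m - i))"
    by (rule sum_distrib_left[symmetric])
  also have "\<dots> = of_nat (Suc m) * Y * (Y + Z) ^ m"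
    by (simp only: binomial_ring)
  finally show ?thesis using Suc by simp
qed

lemma binom_main: "Y + Z = 1 \<Longrightarrow> l \<le> k \<Longrightarrow>
  (\<Sum>i\<le>l. of_nat (k - i) * of_nat (l choose i) * Y ^ i * Z ^ (l - i)) = of_nat (k - l) + of_nat l * Z"
  for Y Z :: "'a::comm_ring_1"
proof -
  assume YZ: "Y + Z = 1" and lk: "l \<le> k"
  have "(\<Sum>i\<le>l. of_nat (k - i) * of_nat (l choose i) * Y ^ i * Z ^ (l - i))
      = (\<Sum>i\<le>l. of_nat k * (of_nat (l choose i) * Y ^ i * Z ^ (l - i)) - of_nat i * of_nat (l choose i) * Y ^ i * Z ^ (l - i))"
  proof (intro sum.cong refl)
    fix i assume "i \<in> {..l}"
    hence "i \<le> k" using lk by simp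
    hence h: "(of_nat (k - i) :: 'a) = of_nat k - of_nat i" by (simp add: of_nat_diff)
    show "of_nat (k - i) * of_nat (l choose i) * Y ^ i * Z ^ (l - i)
        = of_nat k * (of_nat (l choose i) * Y ^ i * Z ^ (l - i)) - of_nat i * of_nat (l choose i) * Y ^ i * Z ^ (l - i)"
      unfolding h by (simp add: algebra_simps)
  qed
  also have "\<dots> = of_nat k * (\<Sum>i\<le>l. of_nat (l choose i) * Y ^ i * Z ^ (l - i))
       - (\<Sum>i\<le>l. of_nat i * of_nat (l choose i) * Y ^ i * Z ^ (l - i))"
    by (simp only: sum_subtractf sum_distrib_left)
  also have "\<dots> = of_nat k * (Y + Z) ^ l - of_nat l * Y * (Y + Z) ^ (l - 1)"
    by (simp only: binomial_ring binom_i)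
  also have "\<dots> = of_nat k - of_nat l * (1 - Z)"
  proof -
    have Y: "Y = 1 - Z" using YZ by (metis add_diff_cancel_right')
    show ?thesis unfolding YZ by (simp add: Y)
  qed
  also have "\<dots> = of_nat (k - l) + of_nat l * Z" using lk by (simp add: of_nat_diff algebra_simps)
  finally show ?thesis .
qed

lemma one_minus_X: "a \<ge> 1 \<Longrightarrow> 1 - (fps_X :: rat fps) = (1 - fps_X ^ a) * u a"
proof -
  assume a: "a \<ge> 1"
  have "(1 - fps_X :: rat fps) = (1 - fps_X) * (qint a * u a)" using qu[OF a] by simp
  also have "\<dots> = (1 - fps_X ^ a) * u a" by (simp add: qint_1mX[symmetric] mult.assoc)
  finally show ?thesis .
qed

lemma diag_sum: "a \<ge> 1 \<Longrightarrow> l \<le> k \<Longrightarrow>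
  (\<Sum>i\<le>l. of_nat (k - i) * (1 - fps_X) ^ i * of_nat (l choose i) * ff (k - i + 1) a)
   = (of_nat (k - l) * u a + of_nat l * G a) * (fps_X ^ ((k - l) * a) * u a ^ k)"
proof -
  assume a: "a \<ge> 1" and lk: "l \<le> k"
  define Z where "Z = (fps_X :: rat fps) ^ a"
  define Y where "Y = 1 - Z"
  have "(\<Sum>i\<le>l. of_nat (k - i) * (1 - fps_X) ^ i * of_nat (l choose i) * ff (k - i + 1) a)
     = (\<Sum>i\<le>l. (u a ^ (k + 1) * Z ^ (k - l)) * (of_nat (k - i) * of_nat (l choose i) * Y ^ i * Z ^ (l - i)))"
  proof (intro sum.cong refl)
    fix i assume "i \<in> {..l}"
    hence il: "i \<le> l" by simp
    have e1: "(fps_X :: rat fps) ^ ((k - i) * a) = Z ^ (k - l) * Z ^ (l - i)"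
    proof -
      have "k - l + (l - i) = k - i" using il lk by simp
      hence "Z ^ (k - l) * Z ^ (l - i) = Z ^ (k - i)" by (simp add: power_add[symmetric])
      also have "\<dots> = fps_X ^ (a * (k - i))" unfolding Z_def by (rule power_mult[symmetric])
      finally show ?thesis by (simp add: mult.commute)
    qed
    have e2: "u a ^ (k + 1) = u a ^ i * u a ^ (k - i + 1)"
      unfolding power_add[symmetric] using il lk by simp
    have h1: "(1 - fps_X) ^ i = Y ^ i * u a ^ i" unfolding Y_def Z_def one_minus_X[OF a] by (simp add: power_mult_distrib)
    have h2: "ff (k - i + 1) a = fps_X ^ ((k - i) * a) * u a ^ (k - i + 1)" by (simp add: ff_def)
    show "of_nat (k - i) * (1 - fps_X) ^ i * of_nat (l choose i) * ff (k - i + 1) a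
      = (u a ^ (k + 1) * Z ^ (k - l)) * (of_nat (k - i) * of_nat (l choose i) * Y ^ i * Z ^ (l - i))"
      unfolding h1 h2 e1 e2 by (simp only: mult_ac)
  qed
  also have "\<dots> = (u a ^ (k + 1) * Z ^ (k - l)) * (of_nat (k - l) + of_nat l * Z)"
    by (simp add: sum_distrib_left[symmetric] binom_main[OF _ lk] Y_def)
  also have "\<dots> = (of_nat (k - l) * u a + of_nat l * G a) * (fps_X ^ ((k - l) * a) * u a ^ k)"
  proof -
    have zz: "Z ^ (k - l) = fps_X ^ ((k - l) * a)" unfolding Z_def power_mult[symmetric] by (simp add: mult.commute)
    show ?thesis unfolding zz by (simp add: G_def Z_def algebra_simps)
  qed
  finally show ?thesis .
qed


fun Z :: "nat list \<Rightarrow> nat \<Rightarrow> rat fps" where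
  "Z [] M = 1"
| "Z (k # p) M = (\<Sum>m\<in>{1..M}. ff k m * Z p (m - 1))"

lemma fill_props: "p \<in> set (fillings ks) \<Longrightarrow> ks \<noteq> [] \<Longrightarrow> (\<forall>x\<in>set ks. x > 0) \<Longrightarrow>
  p \<noteq> [] \<and> (\<forall>x\<in>set p. x > 0) \<and> hd ks \<le> hd p \<and> sum_list p \<le> sum_list ks \<and> length p \<le> length ks"
proof (induction ks arbitrary: p rule: fillings.induct)
  case 1 thus ?case by simp
next
  case (2 k) thus ?case by simp
next
  case (3 k k' ks)
  from "3.prems"(1) obtain p' where p': "p' \<in> set (fillings (k' # ks))"
    and pp: "p = k # p' \<or> p = (k + hd p') # tl p' \<or> p = (k + hd p' - 1) # tl p'" by auto
  have IH: "p' \<noteq> [] \<and> (\<forall>x\<in>set p'. x > 0) \<and> k' \<le> hd p' \<and> sum_list p' \<le> sum_list (k' # ks) \<and> length p' \<le> length (k' # ks)"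
    using "3.IH"[OF p'] "3.prems"(3) by auto
  then obtain h t where pt: "p' = h # t" by (cases p') auto
  have k: "k > 0" using "3.prems"(3) by simp
  show ?case using pp IH k unfolding pt by auto
qed

lemma fill_merge: "x > 0 \<Longrightarrow> fillings ((c + x) # ks) = map (\<lambda>p. (c + hd p) # tl p) (fillings (x # ks))"
proof (cases ks)
  case Nil thus ?thesis by simp
next
  case (Cons k' ks')
  assume x: "x > 0"
  show ?thesis unfolding Cons
    by (simp add: map_concat comp_def) (intro arg_cong[where f=concat] map_cong refl, use x in auto)
qed

lemma ffmul: "k \<ge> 1 \<Longrightarrow> k' \<ge> 1 \<Longrightarrow> a \<ge> 1 \<Longrightarrow>
  ff k a * ff k' a = ff (k + k') a + (1 - fps_X) * ff (k + k' - 1) a"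
proof -
  assume k: "k \<ge> 1" and k': "k' \<ge> 1" and a: "a \<ge> 1"
  define s where "s = k + k' - 2"
  have e1: "ff k a * ff k' a = fps_X ^ (s * a) * u a ^ (s + 2)"
  proof -
    have "(k - 1) * a + (k' - 1) * a = s * a" using k k' by (simp add: s_def add_mult_distrib[symmetric] numeral_2_eq_2)
    moreover have "k + k' = s + 2" using k k' by (simp add: s_def)
    ultimately show ?thesis unfolding ff_def by (simp add: power_add[symmetric] algebra_simps)
  qed
  have e2: "ff (k + k') a = fps_X ^ (s * a) * fps_X ^ a * u a ^ (s + 2)"
  proof -
    have h: "k + k' - 1 = s + 1" using k k' by (simp add: s_def numeral_2_eq_2)
    have "(k + k' - 1) * a = s * a + a" unfolding h by simp
    moreover have "k + k' = s + 2" using k k' by (simp add: s_def)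
    ultimately show ?thesis unfolding ff_def by (simp add: power_add)
  qed
  have e3: "ff (k + k' - 1) a = fps_X ^ (s * a) * u a ^ (s + 1)"
  proof -
    have "(k + k' - 1 - 1) = s" using k k' by (simp add: s_def numeral_2_eq_2)
    moreover have "k + k' - 1 = s + 1" using k k' by (simp add: s_def)
    ultimately show ?thesis unfolding ff_def by simp
  qed
  have "fps_X ^ (s * a) * u a ^ (s + 2) = fps_X ^ (s * a) * u a ^ (s + 1) * u a" by simp
  also have "\<dots> = fps_X ^ (s * a) * u a ^ (s + 1) * (fps_X ^ a * u a + (1 - fps_X))"
    using u_G[OF a] by simp
  also have "\<dots> = fps_X ^ (s * a) * fps_X ^ a * u a ^ (s + 2) + (1 - fps_X) * (fps_X ^ (s * a) * u a ^ (s + 1))"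
    by (simp add: algebra_simps)
  finally show ?thesis unfolding e1 e2 e3 .
qed

lemma TC_rec: "k' \<ge> 1 \<Longrightarrow> TC (k # k' # ks) M
  = (\<Sum>a\<in>{1..M}. F k a * TC (k' # ks) (a - 1)) + Tt * (\<Sum>a\<in>{1..M}. F k a * F k' a * H (map F ks) a 0)"
proof -
  assume k': "k' \<ge> 1"
  have per: "H (map F (k' # ks)) a 0 = TC (k' # ks) (a - 1) + Tt * F k' a * H (map F ks) a 0"
    if a: "a \<in> {1..M}" for a
  proof -
    have e: "{..a} = insert a (insert 0 {1..a-1})" using a by auto
    have "(\<Sum>m\<le>a. boxw a m * F k' m * H (map F ks) m 0)
        = boxw a a * F k' a * H (map F ks) a 0 + (\<Sum>m\<in>{1..a-1}. boxw a m * F k' m * H (map F ks) m 0)"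
    proof -
      have n1: "a \<notin> insert 0 {1..a-1}" using a by auto
      have n2: "0 \<notin> {1..a-1::nat}" by auto
      show ?thesis unfolding e sum.insert[OF finite_insert[THEN iffD2, OF finite_atLeastAtMost] n1]
        sum.insert[OF finite_atLeastAtMost n2] using k' by (simp add: F0)
    qed
    also have "(\<Sum>m\<in>{1..a-1}. boxw a m * F k' m * H (map F ks) m 0) = TC (k' # ks) (a - 1)"
      unfolding TC_def list.case by (intro sum.cong refl) (auto simp: boxw_def)
    finally show ?thesis by (simp add: boxw_def algebra_simps)
  qed
  have "TC (k # k' # ks) M = (\<Sum>a\<in>{1..M}. F k a * H (map F (k' # ks)) a 0)"
    by (simp add: TC_def)
  also have "\<dots> = (\<Sum>a\<in>{1..M}. F k a * (TC (k' # ks) (a - 1) + Tt * F k' a * H (map F ks) a 0))"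
  proof (intro sum.cong refl)
    fix a assume "a \<in> {1..M}"
    thus "F k a * H (map F (k' # ks)) a 0 = F k a * (TC (k' # ks) (a - 1) + Tt * F k' a * H (map F ks) a 0)"
      by (simp only: per)
  qed
  finally have "TC (k # k' # ks) M = (\<Sum>a\<in>{1..M}. F k a * (TC (k' # ks) (a - 1) + Tt * F k' a * H (map F ks) a 0))" .
  thus ?thesis by (simp add: algebra_simps sum.distrib sum_distrib_left)
qed

lemma monom_sum: "monom (sum f A) d = (\<Sum>x\<in>A. monom (f x) d)"
  by (induct A rule: infinite_finite_induct) (auto simp: add_monom[symmetric])

lemma monom_cmult: "monom (c * x) d = [:c:] * monom x d"
  by (simp add: smult_monom)

lemma monom_Suc: "monom x (Suc d) = Tt * monom x d"
  by (simp add: Tt_def monom_Suc)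

lemma sum_list_sum: "(\<Sum>p\<leftarrow>L. \<Sum>m\<in>A. g p m) = (\<Sum>m\<in>A. \<Sum>p\<leftarrow>L. g p m)"
  by (induct L) (auto simp: sum.distrib)

definition summ :: "nat list \<Rightarrow> nat \<Rightarrow> nat list \<Rightarrow> R" where
  "summ ks M p = monom ((1 - fps_X) ^ (sum_list ks - sum_list p) * Z p M) (length ks - length p)"


lemma fillTC: "\<forall>x\<in>set (k # ks). x > 0 \<Longrightarrow>
  (\<Sum>p\<leftarrow>fillings (k # ks). summ (k # ks) M p) = TC (k # ks) M"
proof (induction ks arbitrary: k M)
  case Nil
  have "TC [k] M = (\<Sum>a\<in>{1..M}. F k a)"
    unfolding TC_def list.case by (intro sum.cong refl) (auto simp: boxw_def)
  thus ?case by (simp add: summ_def monom_0 F_def C_sum)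
next
  case (Cons k' ks)
  have k: "k \<ge> 1" and k': "k' \<ge> 1" and pos: "\<forall>x\<in>set (k' # ks). x > 0" using Cons.prems by auto
  define L where "L = fillings (k' # ks)"
  have props: "p \<noteq> [] \<and> (\<forall>x\<in>set p. x > 0) \<and> k' \<le> hd p \<and> sum_list p \<le> sum_list (k' # ks) \<and> length p \<le> length (k' # ks)"
    if "p \<in> set L" for p
    using fill_props[OF that[unfolded L_def]] pos by simp
  have fk: "fillings (k # k' # ks) = concat (map (\<lambda>p. [k # p, (k + hd p) # tl p, (k + hd p - 1) # tl p]) L)"
    by (simp add: L_def)
  have split: "(\<Sum>p\<leftarrow>fillings (k # k' # ks). summ (k # k' # ks) M p)
     = (\<Sum>p\<leftarrow>L. summ (k # k' # ks) M (k # p)) + (\<Sum>p\<leftarrow>L. summ (k # k' # ks) M ((k + hd p) # tl p))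
       + (\<Sum>p\<leftarrow>L. summ (k # k' # ks) M ((k + hd p - 1) # tl p))"
    unfolding fk by (induct L) (simp_all add: algebra_simps)
  have A: "(\<Sum>p\<leftarrow>L. summ (k # k' # ks) M (k # p)) = (\<Sum>a\<in>{1..M}. F k a * TC (k' # ks) (a - 1))"
  proof -
    have "(\<Sum>p\<leftarrow>L. summ (k # k' # ks) M (k # p)) = (\<Sum>p\<leftarrow>L. \<Sum>a\<in>{1..M}. F k a * summ (k' # ks) (a - 1) p)"
    proof (intro arg_cong[where f=sum_list] map_cong refl)
      fix p assume p: "p \<in> set L"
      have "summ (k # k' # ks) M (k # p) = monom ((1 - fps_X) ^ (sum_list (k' # ks) - sum_list p) * Z (k # p) M)
          (length (k' # ks) - length p)"
        unfolding summ_def by simp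
      also have "\<dots> = (\<Sum>a\<in>{1..M}. F k a * summ (k' # ks) (a - 1) p)"
        unfolding summ_def by (simp add: sum_distrib_left monom_sum monom_cmult F_def algebra_simps)
      finally show "summ (k # k' # ks) M (k # p) = (\<Sum>a\<in>{1..M}. F k a * summ (k' # ks) (a - 1) p)" .
    qed
    also have "\<dots> = (\<Sum>a\<in>{1..M}. F k a * (\<Sum>p\<leftarrow>L. summ (k' # ks) (a - 1) p))"
      by (simp add: sum_list_sum sum_list_const_mult)
    also have "\<dots> = (\<Sum>a\<in>{1..M}. F k a * TC (k' # ks) (a - 1))"
      using Cons.IH[OF pos] by (simp add: L_def)
    finally show ?thesis .
  qed
  have B: "(\<Sum>p\<leftarrow>L. summ (k # k' # ks) M ((k + hd p) # tl p)) = Tt * TC ((k + k') # ks) M"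
  proof -
    have "(\<Sum>p\<leftarrow>L. summ (k # k' # ks) M ((k + hd p) # tl p)) = (\<Sum>p\<leftarrow>L. Tt * summ ((k + k') # ks) M ((k + hd p) # tl p))"
    proof (intro arg_cong[where f=sum_list] map_cong refl)
      fix p assume p: "p \<in> set L"
      obtain h t where pt: "p = h # t" using props[OF p] by (cases p) auto
      have le: "h + sum_list t \<le> k' + sum_list ks" "length t \<le> length ks" using props[OF p] pt by auto
      have e1: "sum_list (k # k' # ks) - sum_list ((k + hd p) # tl p) = sum_list ((k + k') # ks) - sum_list ((k + hd p) # tl p)"
        using le pt by simp
      have e2: "length (k # k' # ks) - length ((k + hd p) # tl p) = Suc (length ((k + k') # ks) - length ((k + hd p) # tl p))"
        using le pt by simp
      show "summ (k # k' # ks) M ((k + hd p) # tl p) = Tt * summ ((k + k') # ks) M ((k + hd p) # tl p)"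
        unfolding summ_def e1 e2 monom_Suc ..
    qed
    also have "\<dots> = Tt * (\<Sum>p\<leftarrow>map (\<lambda>p. (k + hd p) # tl p) L. summ ((k + k') # ks) M p)"
      by (simp only: sum_list_const_mult map_map comp_def)
    also have "map (\<lambda>p. (k + hd p) # tl p) L = fillings ((k + k') # ks)"
      unfolding L_def using fill_merge[of k' k ks] k' by simp
    also have "(\<Sum>p\<leftarrow>fillings ((k + k') # ks). summ ((k + k') # ks) M p) = TC ((k + k') # ks) M"
      using Cons.IH[of "k + k'" M] pos by auto
    finally show ?thesis .
  qed
  have C: "(\<Sum>p\<leftarrow>L. summ (k # k' # ks) M ((k + hd p - 1) # tl p)) = Tt * [:1 - fps_X:] * TC ((k + k' - 1) # ks) M"
  proof -
    have "(\<Sum>p\<leftarrow>L. summ (k # k' # ks) M ((k + hd p - 1) # tl p))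
        = (\<Sum>p\<leftarrow>L. Tt * [:1 - fps_X:] * summ ((k + k' - 1) # ks) M ((k - 1 + hd p) # tl p))"
    proof (intro arg_cong[where f=sum_list] map_cong refl)
      fix p assume p: "p \<in> set L"
      obtain h t where pt: "p = h # t" using props[OF p] by (cases p) auto
      have le: "h + sum_list t \<le> k' + sum_list ks" "length t \<le> length ks" "h \<ge> 1" using props[OF p] pt by auto
      have e0: "k + hd p - 1 = k - 1 + hd p" using k by simp
      have e1: "sum_list (k # k' # ks) - sum_list ((k - 1 + hd p) # tl p) = Suc (sum_list ((k + k' - 1) # ks) - sum_list ((k - 1 + hd p) # tl p))"
        using le pt k by simp
      have e2: "length (k # k' # ks) - length ((k - 1 + hd p) # tl p) = Suc (length ((k + k' - 1) # ks) - length ((k - 1 + hd p) # tl p))"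
        using le pt by simp
      show "summ (k # k' # ks) M ((k + hd p - 1) # tl p) = Tt * [:1 - fps_X:] * summ ((k + k' - 1) # ks) M ((k - 1 + hd p) # tl p)"
        unfolding summ_def e0 e1 e2 monom_Suc power_Suc mult.assoc monom_cmult ..
    qed
    also have "\<dots> = Tt * [:1 - fps_X:] * (\<Sum>p\<leftarrow>map (\<lambda>p. (k - 1 + hd p) # tl p) L. summ ((k + k' - 1) # ks) M p)"
      by (simp only: sum_list_const_mult map_map comp_def)
    also have "map (\<lambda>p. (k - 1 + hd p) # tl p) L = fillings ((k + k' - 1) # ks)"
    proof -
      have e: "k + k' - 1 = (k - 1) + k'" using k by simp
      show ?thesis unfolding L_def e by (rule fill_merge[symmetric]) (use k' in simp)
    qed
    also have "(\<Sum>p\<leftarrow>fillings ((k + k' - 1) # ks). summ ((k + k' - 1) # ks) M p) = TC ((k + k' - 1) # ks) M"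
      using Cons.IH[of "k + k' - 1" M] pos k by auto
    finally show ?thesis .
  qed
  have T: "TC (k # k' # ks) M = (\<Sum>a\<in>{1..M}. F k a * TC (k' # ks) (a - 1))
     + Tt * TC ((k + k') # ks) M + Tt * [:1 - fps_X:] * TC ((k + k' - 1) # ks) M"
  proof -
    have "(\<Sum>a\<in>{1..M}. F k a * F k' a * H (map F ks) a 0)
        = (\<Sum>a\<in>{1..M}. F (k + k') a * H (map F ks) a 0 + [:1 - fps_X:] * (F (k + k' - 1) a * H (map F ks) a 0))"
    proof (intro sum.cong refl)
      fix a assume "a \<in> {1..M}"
      hence a1: "a \<ge> 1" by simp
      have "F k a * F k' a = F (k + k') a + [:1 - fps_X:] * F (k + k' - 1) a"
        unfolding F_def C_mult[symmetric] ffmul[OF k k' a1] by simp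
      thus "F k a * F k' a * H (map F ks) a 0 = F (k + k') a * H (map F ks) a 0 + [:1 - fps_X:] * (F (k + k' - 1) a * H (map F ks) a 0)"
        by (simp add: algebra_simps)
    qed
    also have "\<dots> = TC ((k + k') # ks) M + [:1 - fps_X:] * TC ((k + k' - 1) # ks) M"
      by (simp add: TC_def sum.distrib sum_distrib_left)
    finally show ?thesis using TC_rec[OF k', of k ks M] by (simp add: algebra_simps)
  qed
  show ?case unfolding split A B C T by simp
qed


definition SL :: "nat \<Rightarrow> nat \<Rightarrow> nat list set" where
  "SL n M = {ms. length ms = n \<and> sorted_wrt (>) ms \<and> set ms \<subseteq> {1..M}}"

lemma SL_finite: "finite (SL n M)"
proof -
  have "SL n M \<subseteq> {ms. set ms \<subseteq> {1..M} \<and> length ms = n}" by (auto simp: SL_def)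
  moreover have "finite {ms. set ms \<subseteq> {1..M} \<and> length ms = n}" by (rule finite_lists_length_eq) simp
  ultimately show ?thesis by (rule finite_subset)
qed

lemma SL_Suc: "SL (Suc n) M = (\<lambda>(m, ms). m # ms) ` (SIGMA m:{1..M}. SL n (m - 1))"
proof (intro set_eqI iffI)
  fix xs assume "xs \<in> SL (Suc n) M"
  then obtain m ms where xs: "xs = m # ms" and h: "length ms = n" "\<forall>x\<in>set ms. m > x" "sorted_wrt (>) ms"
     "m \<in> {1..M}" "set ms \<subseteq> {1..M}"
    by (cases xs) (auto simp: SL_def)
  have "set ms \<subseteq> {1..m-1}" using h by force
  hence "(m, ms) \<in> (SIGMA m:{1..M}. SL n (m - 1))" using h by (auto simp: SL_def)
  thus "xs \<in> (\<lambda>(m, ms). m # ms) ` (SIGMA m:{1..M}. SL n (m - 1))" using xs by force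
next
  fix xs assume "xs \<in> (\<lambda>(m, ms). m # ms) ` (SIGMA m:{1..M}. SL n (m - 1))"
  then obtain m ms where xs: "xs = m # ms" and m: "m \<in> {1..M}" and ms: "ms \<in> SL n (m - 1)" by auto
  thus "xs \<in> SL (Suc n) M" using ms m by (force simp: SL_def)
qed

lemma zq_term_Cons: "zq_term (k # p) (m # ms) = ff k m * zq_term p ms"
  unfolding zq_term_def ff_def u_def length_Cons
  by (subst prod.lessThan_Suc_shift) (simp del: prod.lessThan_Suc)

lemma ZS: "(\<Sum>ms\<in>SL (length p) M. zq_term p ms) = Z p M"
proof (induction p arbitrary: M)
  case Nil
  have "SL 0 M = {[]}" by (auto simp: SL_def)
  thus ?case by (simp add: zq_term_def)
next
  case (Cons k p)
  have inj: "inj_on (\<lambda>(m, ms). m # ms) (SIGMA m:{1..M}. SL (length p) (m - 1))"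
    by (auto simp: inj_on_def)
  have "(\<Sum>ms\<in>SL (length (k # p)) M. zq_term (k # p) ms)
      = (\<Sum>x\<in>(SIGMA m:{1..M}. SL (length p) (m - 1)). zq_term (k # p) ((\<lambda>(m, ms). m # ms) x))"
    unfolding length_Cons SL_Suc by (rule sum.reindex[OF inj, unfolded comp_def])
  also have "\<dots> = (\<Sum>(m, ms)\<in>(SIGMA m:{1..M}. SL (length p) (m - 1)). zq_term (k # p) (m # ms))"
    by (intro sum.cong refl) auto
  also have "\<dots> = (\<Sum>m\<in>{1..M}. \<Sum>ms\<in>SL (length p) (m - 1). zq_term (k # p) (m # ms))"
    by (rule sum.Sigma[symmetric]) (auto simp: SL_finite)
  also have "\<dots> = (\<Sum>m\<in>{1..M}. ff k m * Z p (m - 1))"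
    by (simp add: zq_term_Cons sum_distrib_left[symmetric] Cons.IH)
  finally show ?case by simp
qed

lemma zeta_q_nth: "zeta_q p $ i = Z p i $ i"
  unfolding zeta_q_def using ZS[of p i] by (simp add: SL_def)

lemma Z_order: "k \<ge> 2 \<Longrightarrow> i \<le> N \<Longrightarrow> Z (k # p) N $ i = Z (k # p) i $ i"
proof -
  assume k: "k \<ge> 2" and iN: "i \<le> N"
  have e: "{1..N} = {1..i} \<union> {Suc i..N}" using iN by auto
  have "Z (k # p) N = Z (k # p) i + (\<Sum>m\<in>{Suc i..N}. ff k m * Z p (m - 1))"
    unfolding Z.simps e by (subst sum.union_disjoint) auto
  moreover have "(\<Sum>m\<in>{Suc i..N}. ff k m * Z p (m - 1)) $ i = 0"
    unfolding fps_sum_nth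
  proof (intro sum.neutral ballI)
    fix m assume m: "m \<in> {Suc i..N}"
    have k1: "1 \<le> k - 1" using k by arith
    have mm: "m \<le> (k - 1) * m" using mult_le_mono1[OF k1, of m] by simp
    have "i < m" using m by simp
    hence "i < (k - 1) * m" using mm by linarith
    thus "(ff k m * Z p (m - 1)) $ i = 0"
      unfolding ff_def mult.assoc fps_X_power_mult_nth by simp
  qed
  ultimately show ?thesis by simp
qed

lemma X_dvd: "(\<And>i. i \<le> N \<Longrightarrow> f $ i = 0) \<Longrightarrow> (fps_X::rat fps) ^ Suc N dvd f"
proof -
  assume h: "\<And>i. i \<le> N \<Longrightarrow> f $ i = 0"
  have "f = fps_X ^ Suc N * fps_shift (Suc N) f"
    by (rule fps_ext) (auto simp del: power_Suc simp add: fps_X_power_mult_nth h less_Suc_eq_le)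
  thus ?thesis by (metis dvd_triv_left)
qed

lemma zeta_Z_dvd: "k \<ge> 2 \<Longrightarrow> (fps_X::rat fps) ^ Suc N dvd (zeta_q (k # p) - Z (k # p) N)"
proof (rule X_dvd)
  fix i assume "k \<ge> 2" "i \<le> N"
  thus "(zeta_q (k # p) - Z (k # p) N) $ i = 0"
    unfolding fps_sub_nth zeta_q_nth Z_order[OF \<open>k \<ge> 2\<close> \<open>i \<le> N\<close>] by simp
qed

definition eqN :: "nat \<Rightarrow> R \<Rightarrow> R \<Rightarrow> bool" where
  "eqN N x y \<longleftrightarrow> [:fps_X ^ Suc N:] dvd (x - y)"

lemma dvd_sum_list: "(\<And>x. x \<in> set xs \<Longrightarrow> a dvd f x) \<Longrightarrow> (a::'a::comm_ring_1) dvd (\<Sum>x\<leftarrow>xs. f x)"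
  by (induct xs) auto

lemma zeta_qt_TC: "\<forall>x\<in>set (k # ks). x > 0 \<Longrightarrow> k \<ge> 2 \<Longrightarrow> eqN N (zeta_qt (k # ks)) (TC (k # ks) N)"
proof -
  assume pos: "\<forall>x\<in>set (k # ks). x > 0" and k: "k \<ge> 2"
  have "zeta_qt (k # ks) - TC (k # ks) N = (\<Sum>p\<leftarrow>fillings (k # ks).
      monom ((1 - fps_X) ^ (sum_list (k # ks) - sum_list p) * (zeta_q p - Z p N)) (length (k # ks) - length p))"
    unfolding zeta_qt_def fillTC[OF pos, symmetric] summ_def
    by (simp add: sum_list_subtractf[symmetric] right_diff_distrib add_monom[symmetric] diff_monom)
  moreover have "[:fps_X ^ Suc N:] dvd \<dots>"
  proof (rule dvd_sum_list)
    fix p assume p: "p \<in> set (fillings (k # ks))"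
    from fill_props[OF p _ pos] obtain h t where pt: "p = h # t" and h: "h \<ge> 2" using k
      by (cases p) auto
    obtain g where g: "zeta_q p - Z p N = fps_X ^ Suc N * g" using zeta_Z_dvd[OF h, of N t] pt by (auto elim: dvdE)
    show "[:fps_X ^ Suc N:] dvd monom ((1 - fps_X) ^ (sum_list (k # ks) - sum_list p) * (zeta_q p - Z p N)) (length (k # ks) - length p)"
    proof -
      define c where "c = (1 - fps_X :: rat fps) ^ (sum_list (k # ks) - sum_list p)"
      define d where "d = length (k # ks) - length p"
      have "monom (c * (fps_X ^ Suc N * g)) d = monom (fps_X ^ Suc N * (c * g)) d" by (simp add: algebra_simps)
      also have "\<dots> = [:fps_X ^ Suc N:] * monom (c * g) d" by (rule monom_cmult)
      finally have eq: "monom (c * (fps_X ^ Suc N * g)) d = [:fps_X ^ Suc N:] * monom (c * g) d" .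
      show ?thesis unfolding g c_def[symmetric] d_def[symmetric] eq by (rule dvd_triv_left)
    qed
  qed
  ultimately show ?thesis by (simp add: eqN_def)
qed


lemma sum_list_rotate1: "sum_list (rotate1 xs) = sum_list (xs :: 'a::comm_monoid_add list)"
  by (cases xs) (simp_all add: add.commute)
lemma sum_list_rotate: "sum_list (rotate n xs) = sum_list (xs :: 'a::comm_monoid_add list)"
  by (induct n) (simp_all add: sum_list_rotate1)
lemma prod_list_rotate1: "prod_list (rotate1 xs) = prod_list (xs :: 'a::comm_monoid_mult list)"
  by (cases xs) (simp_all add: mult.commute)
lemma prod_list_rotate: "prod_list (rotate n xs) = prod_list (xs :: 'a::comm_monoid_mult list)"
  by (induct n) (simp_all add: prod_list_rotate1)

lemma prod_ff: "prod_list (map (\<lambda>x. ff x a) xs) = fps_X ^ (sdef xs * a) * u a ^ sum_list xs"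
  by (induct xs) (simp_all add: sdef_def ff_def power_add algebra_simps)

lemma C_prod_list: "[:prod_list xs:] = (prod_list (map (\<lambda>x. [:x:]) xs) :: 'a::comm_ring_1 poly)"
  by (induct xs) (simp_all add: C_mult one_pCons)

lemma sdef_pos: "\<forall>x\<in>set xs. x > 0 \<Longrightarrow> sdef xs = sum_list xs - length xs"
proof (induct xs)
  case Nil thus ?case by (simp add: sdef_def)
next
  case (Cons x xs)
  have "length xs \<le> sum_list xs" using Cons.prems
    by (induct xs) auto
  thus ?case using Cons by (simp add: sdef_def)
qed

lemma sdef_ge1: "\<forall>x\<in>set xs. x > 0 \<Longrightarrow> xs \<noteq> replicate (length xs) 1 \<Longrightarrow> sdef xs \<ge> 1"
proof (rule ccontr)
  assume pos: "\<forall>x\<in>set xs. x > 0" and nr: "xs \<noteq> replicate (length xs) 1" and "\<not> 1 \<le> sdef xs"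
  hence "sdef xs = 0" by linarith
  hence "\<forall>x\<in>set xs. x \<le> 1" by (simp add: sdef_def)
  hence "\<forall>x\<in>set xs. x = 1" using pos by fastforce
  hence "xs = replicate (length xs) 1" by (simp add: replicate_length_same)
  thus False using nr by simp
qed

lemma eqN_all: "(\<And>N. eqN N P Q) \<Longrightarrow> P = Q"
proof -
  assume h: "\<And>N. eqN N P Q"
  have "coeff (P - Q) e $ N = 0" for e N
  proof -
    obtain W where W: "P - Q = [:fps_X ^ Suc N:] * W" using h[of N] by (auto simp: eqN_def elim: dvdE)
    show ?thesis unfolding W by (simp del: power_Suc add: fps_X_power_mult_nth)
  qed
  hence "P - Q = 0" by (intro poly_eqI fps_ext) simp
  thus ?thesis by simp
qed

lemma TCp_TC: "k \<ge> 1 \<Longrightarrow> TCp (map F (k # mid)) M = TC ((k + 1) # mid) M"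
  unfolding TCp_def TC_def by (auto intro!: sum.cong simp: F_def ff_Suc mult.commute)


lemma eqN_refl: "eqN N a a" by (simp add: eqN_def)
lemma eqN_eq: "a = b \<Longrightarrow> eqN N a b" by (simp add: eqN_def)
lemma eqN_sym: "eqN N a b \<Longrightarrow> eqN N b a"
proof -
  assume h: "eqN N a b"
  have "b - a = - (a - b)" by simp
  thus ?thesis using h unfolding eqN_def by (simp only: dvd_minus_iff)
qed
lemma eqN_trans: "eqN N a b \<Longrightarrow> eqN N b c \<Longrightarrow> eqN N a c"
proof -
  assume "eqN N a b" "eqN N b c"
  moreover have "a - c = (a - b) + (b - c)" by simp
  ultimately show ?thesis unfolding eqN_def by (simp only: dvd_add)
qed
lemma eqN_add: "eqN N a b \<Longrightarrow> eqN N c d \<Longrightarrow> eqN N (a + c) (b + d)"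
proof -
  assume "eqN N a b" "eqN N c d"
  moreover have "(a + c) - (b + d) = (a - b) + (c - d)" by simp
  ultimately show ?thesis unfolding eqN_def by (simp only: dvd_add)
qed
lemma eqN_diff: "eqN N a b \<Longrightarrow> eqN N c d \<Longrightarrow> eqN N (a - c) (b - d)"
proof -
  assume "eqN N a b" "eqN N c d"
  moreover have "(a - c) - (b - d) = (a - b) - (c - d)" by simp
  ultimately show ?thesis unfolding eqN_def by (simp only: dvd_diff)
qed
lemma eqN_mult: "eqN N a b \<Longrightarrow> eqN N (c * a) (c * b)"
proof -
  assume "eqN N a b"
  moreover have "c * a - c * b = c * (a - b)" by (simp add: right_diff_distrib)
  ultimately show ?thesis unfolding eqN_def by (simp only: dvd_mult)
qed
lemma eqN_sum: "(\<And>x. x \<in> A \<Longrightarrow> eqN N (f x) (g x)) \<Longrightarrow> eqN N (sum f A) (sum g A)"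
  unfolding eqN_def by (simp add: sum_subtractf[symmetric] dvd_sum)

lemma monom_1_Tt: "monom 1 n = Tt ^ n"
  by (induct n) (simp_all add: monom_Suc one_pCons)

lemma rot_cons: "i < length ks \<Longrightarrow> rotate i ks = ks ! i # tl (rotate i ks)"
proof -
  assume i: "i < length ks"
  hence ne: "ks \<noteq> []" by auto
  have "hd (rotate i ks) = ks ! i" using hd_rotate_conv_nth[OF ne] i by simp
  moreover have "rotate i ks \<noteq> []" using ne by simp
  ultimately show ?thesis by (metis list.collapse)
qed

lemma rot_suc: "i < length ks \<Longrightarrow> rotate (Suc i) ks = tl (rotate i ks) @ [ks ! i]"
proof -
  assume i: "i < length ks"
  have "rotate (Suc i) ks = rotate1 (ks ! i # tl (rotate i ks))" using rot_cons[OF i] by (metis rotate_Suc)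
  thus ?thesis by simp
qed

lemma sdef_rotate: "sdef (rotate i ks) = sdef ks"
  unfolding sdef_def by (simp add: rotate_map[symmetric] sum_list_rotate)


lemma stepLHS:
  assumes pos: "\<forall>k\<in>set ks. 0 < k"
  shows "eqN N (\<Sum>i<length ks. \<Sum>j<ks!i - 1. zeta_qt ((ks!i - j) # tl (rotate i ks) @ [j + 1]))
                (\<Sum>i<length ks. \<Sum>j<ks!i - 1. TC ((ks!i - j) # tl (rotate i ks) @ [j + 1]) N)"
proof (intro eqN_sum)
  fix i j assume i: "i \<in> {..<length ks}" and j: "j \<in> {..<ks!i - 1}"
  have "set (tl (rotate i ks)) \<subseteq> set (rotate i ks)"
    by (cases "rotate i ks") auto
  hence "set (tl (rotate i ks)) \<subseteq> set ks" by simp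
  hence "\<forall>x\<in>set ((ks!i - j) # tl (rotate i ks) @ [j + 1]). x > 0" using pos j by auto
  moreover have "ks!i - j \<ge> 2" using j by auto
  ultimately show "eqN N (zeta_qt ((ks!i - j) # tl (rotate i ks) @ [j + 1])) (TC ((ks!i - j) # tl (rotate i ks) @ [j + 1]) N)"
    using zeta_qt_TC[of "ks!i - j" "tl (rotate i ks) @ [j + 1]" N] by simp
qed

lemma stepRot:
  assumes pos: "\<forall>k\<in>set ks. 0 < k"
  shows "(\<Sum>i<length ks. \<Sum>j<ks!i - 1. TC ((ks!i - j) # tl (rotate i ks) @ [j + 1]) N)
   = (\<Sum>i<length ks. Diag (tl (rotate i ks)) (ks!i) N + Tt * Dg (tl (rotate i ks)) (ks!i) N)
     + (1 - Tt) * (\<Sum>i<length ks. TCp (map F (rotate i ks)) N)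
     - (\<Sum>i<length ks. Err (tl (rotate i ks)) (ks!i) N)"
proof -
  define Q where "Q i = Tq (map F (rotate i ks)) N" for i
  define P where "P i = TCp (map F (rotate i ks)) N" for i
  have per: "(\<Sum>j<ks!i - 1. TC ((ks!i - j) # tl (rotate i ks) @ [j + 1]) N)
     = (Diag (tl (rotate i ks)) (ks!i) N + Tt * Dg (tl (rotate i ks)) (ks!i) N)
       + (Q (Suc i) - Q i) - Tt * (P (Suc i) - P i) + (1 - Tt) * P i - Err (tl (rotate i ks)) (ks!i) N"
    if i: "i \<in> {..<length ks}" for i
  proof -
    have il: "i < length ks" using i by simp
    have k: "ks ! i \<ge> 1" using pos il by (simp add: Suc_le_eq)
    have e1: "map F (tl (rotate i ks) @ [ks ! i]) = map F (rotate (Suc i) ks)" using rot_suc[OF il] by simp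
    have e2: "map F (ks ! i # tl (rotate i ks)) = map F (rotate i ks)" using rot_cons[OF il] by simp
    show ?thesis unfolding rot_identity[OF k] e1 e2 Q_def P_def by (simp add: algebra_simps)
  qed
  have "(\<Sum>i<length ks. \<Sum>j<ks!i - 1. TC ((ks!i - j) # tl (rotate i ks) @ [j + 1]) N)
     = (\<Sum>i<length ks. (Diag (tl (rotate i ks)) (ks!i) N + Tt * Dg (tl (rotate i ks)) (ks!i) N)
       + (Q (Suc i) - Q i) - Tt * (P (Suc i) - P i) + (1 - Tt) * P i - Err (tl (rotate i ks)) (ks!i) N)"
    by (intro sum.cong refl) (rule per)
  also have "\<dots>
    = (\<Sum>i<length ks. Diag (tl (rotate i ks)) (ks!i) N + Tt * Dg (tl (rotate i ks)) (ks!i) N)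
       + (\<Sum>i<length ks. Q (Suc i) - Q i) - Tt * (\<Sum>i<length ks. P (Suc i) - P i) + (1 - Tt) * (\<Sum>i<length ks. P i)
       - (\<Sum>i<length ks. Err (tl (rotate i ks)) (ks!i) N)"
    by (simp only: sum.distrib sum_subtractf sum_distrib_left right_diff_distrib)
  moreover have "(\<Sum>i<length ks. Q (Suc i) - Q i) = 0" "(\<Sum>i<length ks. P (Suc i) - P i) = 0"
    by (simp_all only: sum_lessThan_telescope) (simp_all add: Q_def P_def)
  ultimately show ?thesis by (simp add: P_def)
qed

lemma stepDiag:
  assumes pos: "\<forall>k\<in>set ks. 0 < k" and ne: "ks \<noteq> []"
  shows "(\<Sum>i<length ks. Diag (tl (rotate i ks)) (ks!i) N + Tt * Dg (tl (rotate i ks)) (ks!i) N)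
    = Tt ^ length ks * (\<Sum>a\<in>{1..N}. [:(of_nat (sdef ks) * u a + of_nat (length ks) * G a)
          * (fps_X ^ (sdef ks * a) * u a ^ sum_list ks):])"
proof -
  define l where "l = length ks"
  define PA where "PA a = fps_X ^ (sdef ks * a) * u a ^ sum_list ks" for a
  have per: "Diag (tl (rotate i ks)) (ks!i) N + Tt * Dg (tl (rotate i ks)) (ks!i) N
      = Tt ^ l * (\<Sum>a\<in>{1..N}. [:(of_nat (ks!i - 1) * u a + G a) * PA a:])"
    if i: "i \<in> {..<l}" for i
  proof -
    have il: "i < length ks" using i l_def by simp
    define mid where "mid = tl (rotate i ks)"
    define k where "k = ks ! i"
    have rc: "rotate i ks = k # mid" using rot_cons[OF il] by (simp add: mid_def k_def)
    have lm: "Suc (length mid) = l" using rc l_def by (metis length_Cons length_rotate)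
    define Pm where "Pm a = prod_list (map (\<lambda>x. ff x a) mid)" for a
    have lP: "ff k a * Pm a = PA a" for a
    proof -
      have "ff k a * Pm a = prod_list (map (\<lambda>x. ff x a) (rotate i ks))" by (simp add: rc Pm_def)
      also have "\<dots> = prod_list (map (\<lambda>x. ff x a) ks)" by (simp add: rotate_map[symmetric] prod_list_rotate)
      finally show ?thesis by (simp add: prod_ff PA_def)
    qed
    have pl: "prod_list (map (\<lambda>w. w a) (map F mid)) = [:Pm a:]" for a
      by (simp add: Pm_def C_prod_list F_def comp_def)
    have lH: "H (map F mid) a a = Tt ^ l * [:Pm a:]" for a
      unfolding H_diag pl using lm by simp
    have lK: "Tt * K (map F mid) a a = Tt ^ l * [:Pm a:]" for a
      unfolding K_diag pl using lm by (simp flip: lm)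
    have "Diag mid k N + Tt * Dg mid k N = Tt ^ l * (\<Sum>a\<in>{1..N}. [:(of_nat (k - 1) * u a + G a) * PA a:])"
      unfolding Diag_def Dg_def sum_distrib_left sum.distrib[symmetric]
    proof (intro sum.cong refl)
      fix a assume "a \<in> {1..N}"
      have e: "fps_X ^ ((k - 1) * a) * u a ^ (k + 1) = u a * ff k a" by (simp add: ff_def)
      have fid: "Pm a * (of_nat (k - 1) * (fps_X ^ ((k - 1) * a) * u a ^ (k + 1))) + G a * Pm a * ff k a
          = (of_nat (k - 1) * u a + G a) * PA a"
        unfolding e lP[symmetric] by (simp add: algebra_simps)
      have "H (map F mid) a a * [:of_nat (k - 1) * (fps_X ^ ((k - 1) * a) * u a ^ (k + 1)):]
          + Tt * ([:G a:] * K (map F mid) a a * F k a)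
          = Tt ^ l * [:Pm a:] * [:of_nat (k - 1) * (fps_X ^ ((k - 1) * a) * u a ^ (k + 1)):]
          + [:G a:] * (Tt * K (map F mid) a a) * F k a"
        unfolding lH by (simp only: mult_ac)
      also have "\<dots> = Tt ^ l * ([:Pm a:] * [:of_nat (k - 1) * (fps_X ^ ((k - 1) * a) * u a ^ (k + 1)):]
          + [:G a:] * [:Pm a:] * [:ff k a:])"
        unfolding lK F_def by (simp only: mult_ac distrib_left)
      also have "[:Pm a:] * [:of_nat (k - 1) * (fps_X ^ ((k - 1) * a) * u a ^ (k + 1)):]
          + [:G a:] * [:Pm a:] * [:ff k a:] = [:(of_nat (k - 1) * u a + G a) * PA a:]"
        unfolding fid[symmetric] by (simp only: C_mult C_add)
      finally show "H (map F mid) a a * [:of_nat (k - 1) * (fps_X ^ ((k - 1) * a) * u a ^ (k + 1)):]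
          + Tt * ([:G a:] * K (map F mid) a a * F k a) = Tt ^ l * [:(of_nat (k - 1) * u a + G a) * PA a:]" .
    qed
    thus ?thesis by (simp add: mid_def k_def)
  qed
  have sd: "(\<Sum>i<l. of_nat (ks ! i - 1) :: rat fps) = of_nat (sdef ks)"
    unfolding sdef_def l_def by (simp add: sum_list_sum_nth atLeast0LessThan)
  have "(\<Sum>i<length ks. Diag (tl (rotate i ks)) (ks!i) N + Tt * Dg (tl (rotate i ks)) (ks!i) N)
      = (\<Sum>i<l. Tt ^ l * (\<Sum>a\<in>{1..N}. [:(of_nat (ks!i - 1) * u a + G a) * PA a:]))"
    unfolding l_def[symmetric] by (intro sum.cong refl) (rule per)
  also have "\<dots> = Tt ^ l * (\<Sum>a\<in>{1..N}. [:\<Sum>i<l. (of_nat (ks!i - 1) * u a + G a) * PA a:])"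
    by (simp only: sum_distrib_left[symmetric] C_sum) (simp only: sum.swap[of _ "{..<l}"])
  also have "\<dots> = Tt ^ l * (\<Sum>a\<in>{1..N}. [:(of_nat (sdef ks) * u a + of_nat l * G a) * PA a:])"
  proof -
    have "(\<Sum>i<l. (of_nat (ks!i - 1) * u a + G a) * PA a) = (of_nat (sdef ks) * u a + of_nat l * G a) * PA a" for a
      by (simp add: sum.distrib sd[symmetric] sum_distrib_left sum_distrib_right algebra_simps)
    thus ?thesis by simp
  qed
  finally show ?thesis by (simp add: l_def PA_def)
qed

lemma TC_single: "TC [m] N = [:\<Sum>a\<in>{1..N}. ff m a:]"
  unfolding TC_def by (simp add: C_sum F_def boxw_def)

lemma stepRHS2:
  assumes lk: "l \<le> kk"
  shows "eqN N (monom 1 l * (\<Sum>i=0..l. smult (of_nat (kk - i) * (1 - fps_X) ^ i * of_nat (l choose i)) (zeta_qt [kk - i + 1])))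
     (Tt ^ l * (\<Sum>a\<in>{1..N}. [:(of_nat (kk - l) * u a + of_nat l * G a) * (fps_X ^ ((kk - l) * a) * u a ^ kk):]))"
proof -
  define c where "c i = of_nat (kk - i) * (1 - fps_X) ^ i * (of_nat (l choose i) :: rat fps)" for i
  have t: "eqN N (smult (c i) (zeta_qt [kk - i + 1])) (smult (c i) (TC [kk - i + 1] N))" for i
  proof (cases "kk - i \<ge> 1")
    case True
    hence "eqN N (zeta_qt [kk - i + 1]) (TC [kk - i + 1] N)" by (intro zeta_qt_TC) auto
    hence "eqN N ([:c i:] * zeta_qt [kk - i + 1]) ([:c i:] * TC [kk - i + 1] N)" by (rule eqN_mult)
    thus ?thesis by simp
  next
    case False
    hence "c i = 0" by (simp add: c_def)
    thus ?thesis by (simp add: eqN_refl)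
  qed
  have "eqN N (\<Sum>i=0..l. smult (c i) (zeta_qt [kk - i + 1])) (\<Sum>i=0..l. smult (c i) (TC [kk - i + 1] N))"
    by (intro eqN_sum t)
  moreover have "(\<Sum>i=0..l. smult (c i) (TC [kk - i + 1] N))
     = (\<Sum>a\<in>{1..N}. [:(of_nat (kk - l) * u a + of_nat l * G a) * (fps_X ^ ((kk - l) * a) * u a ^ kk):])"
  proof -
    have "(\<Sum>i=0..l. smult (c i) (TC [kk - i + 1] N)) = [:\<Sum>i\<le>l. c i * (\<Sum>a\<in>{1..N}. ff (kk - i + 1) a):]"
      unfolding TC_single atLeast0AtMost smult_pCons smult_0_right by (simp only: C_sum)
    also have "\<dots> = [:\<Sum>a\<in>{1..N}. \<Sum>i\<le>l. c i * ff (kk - i + 1) a:]"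
      by (simp add: sum_distrib_left) (rule sum.swap)
    also have "\<dots> = [:\<Sum>a\<in>{1..N}. (of_nat (kk - l) * u a + of_nat l * G a) * (fps_X ^ ((kk - l) * a) * u a ^ kk):]"
    proof (intro arg_cong[where f="\<lambda>x. [:x:]"] sum.cong refl)
      fix a assume "a \<in> {1..N}"
      hence a: "a \<ge> 1" by simp
      show "(\<Sum>i\<le>l. c i * ff (kk - i + 1) a) = (of_nat (kk - l) * u a + of_nat l * G a) * (fps_X ^ ((kk - l) * a) * u a ^ kk)"
        unfolding c_def diag_sum[OF a lk, symmetric] ..
    qed
    finally show ?thesis by (simp add: C_sum)
  qed
  ultimately show ?thesis unfolding monom_1_Tt c_def by (intro eqN_mult) simp
qed

theorem theorem1p3:
  fixes ks :: "nat list"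
  assumes pos: "\<forall>k\<in>set ks. 0 < k"
    and notones: "ks \<noteq> replicate (length ks) 1"
  shows "(\<Sum>i<length ks. \<Sum>j<ks!i - 1.
            zeta_qt ((ks!i - j) # tl (rotate i ks) @ [j + 1]))
       = [:1, -1:] * (\<Sum>i<length ks. zeta_qt ((ks!i + 1) # tl (rotate i ks)))
         + monom 1 (length ks) *
           (\<Sum>i=0..length ks. smult (of_nat (sum_list ks - i) * (1 - fps_X) ^ i
                * of_nat (length ks choose i)) (zeta_qt [sum_list ks - i + 1]))"
proof (rule eqN_all)
  fix N
  have ne: "ks \<noteq> []" using notones by auto
  have sd1: "sdef ks \<ge> 1" by (rule sdef_ge1[OF pos notones])
  have sdk: "sdef ks = sum_list ks - length ks" by (rule sdef_pos[OF pos])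
  have lk: "length ks \<le> sum_list ks"
  proof -
    have "length ks \<le> sum_list ks" using pos by (induct ks) auto
    thus ?thesis .
  qed
  define D where "D = Tt ^ length ks * (\<Sum>a\<in>{1..N}. [:(of_nat (sum_list ks - length ks) * u a + of_nat (length ks) * G a)
          * (fps_X ^ ((sum_list ks - length ks) * a) * u a ^ sum_list ks):])"
  define ZS where "ZS = (\<Sum>i<length ks. zeta_qt ((ks!i + 1) # tl (rotate i ks)))"
  define TS where "TS = (\<Sum>i<length ks. TCp (map F (rotate i ks)) N)"
  define ES where "ES = (\<Sum>i<length ks. Err (tl (rotate i ks)) (ks!i) N)"
  have tlpos: "\<forall>x\<in>set (tl (rotate i ks)). x > 0" for i
  proof -
    have "set (tl (rotate i ks)) \<subseteq> set (rotate i ks)" by (cases "rotate i ks") auto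
    thus ?thesis using pos by auto
  qed
  have L1: "eqN N (\<Sum>i<length ks. \<Sum>j<ks!i - 1. zeta_qt ((ks!i - j) # tl (rotate i ks) @ [j + 1]))
     (D + (1 - Tt) * TS - ES)"
    using stepLHS[OF pos, of N] unfolding stepRot[OF pos] stepDiag[OF pos ne] D_def TS_def ES_def sdk .
  have E0: "eqN N ES 0"
    unfolding ES_def
  proof (rule eqN_sum[where g="\<lambda>_. 0", simplified])
    fix i assume i: "i \<in> {..<length ks}"
    hence il: "i < length ks" by simp
    have "sdef (rotate i ks) = (ks ! i - 1) + sdef (tl (rotate i ks))"
      by (subst rot_cons[OF il]) (simp add: sdef_def)
    hence "sdef (tl (rotate i ks)) + (ks ! i - 1) \<ge> 1" using sd1 sdef_rotate[of i ks] by simp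
    thus "eqN N (Err (tl (rotate i ks)) (ks ! i) N) 0" unfolding eqN_def diff_zero by (rule Err_dvd)
  qed
  have Z1: "eqN N ZS TS"
    unfolding ZS_def TS_def
  proof (rule eqN_sum)
    fix i assume i: "i \<in> {..<length ks}"
    hence il: "i < length ks" by simp
    have k: "ks ! i \<ge> 1" using pos il by (simp add: Suc_le_eq)
    have "TCp (map F (rotate i ks)) N = TC ((ks!i + 1) # tl (rotate i ks)) N"
      by (subst rot_cons[OF il]) (rule TCp_TC[OF k])
    moreover have "eqN N (zeta_qt ((ks!i + 1) # tl (rotate i ks))) (TC ((ks!i + 1) # tl (rotate i ks)) N)"
      using zeta_qt_TC[of "ks!i + 1" "tl (rotate i ks)" N] tlpos[of i] k by simp
    ultimately show "eqN N (zeta_qt ((ks!i + 1) # tl (rotate i ks))) (TCp (map F (rotate i ks)) N)" by simp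
  qed
  have R2: "eqN N (monom 1 (length ks) *
           (\<Sum>i=0..length ks. smult (of_nat (sum_list ks - i) * (1 - fps_X) ^ i
                * of_nat (length ks choose i)) (zeta_qt [sum_list ks - i + 1]))) D"
    unfolding D_def by (rule stepRHS2[OF lk])
  have c1: "[:1, -1:] = (1 - Tt :: R)" by (simp add: Tt_def one_pCons)
  have "eqN N (D + (1 - Tt) * TS - ES) (D + (1 - Tt) * ZS - 0)"
    by (intro eqN_diff eqN_add eqN_refl eqN_mult E0 eqN_sym[OF Z1])
  hence L2: "eqN N (\<Sum>i<length ks. \<Sum>j<ks!i - 1. zeta_qt ((ks!i - j) # tl (rotate i ks) @ [j + 1])) (D + (1 - Tt) * ZS)"
    using L1 eqN_trans by simp
  have R: "eqN N ([:1, -1:] * ZS + monom 1 (length ks) *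
           (\<Sum>i=0..length ks. smult (of_nat (sum_list ks - i) * (1 - fps_X) ^ i
                * of_nat (length ks choose i)) (zeta_qt [sum_list ks - i + 1]))) (D + (1 - Tt) * ZS)"
    unfolding c1 by (subst add.commute, rule eqN_add[OF R2 eqN_refl])
  show "eqN N (\<Sum>i<length ks. \<Sum>j<ks!i - 1. zeta_qt ((ks!i - j) # tl (rotate i ks) @ [j + 1]))
       ([:1, -1:] * (\<Sum>i<length ks. zeta_qt ((ks!i + 1) # tl (rotate i ks)))
         + monom 1 (length ks) *
           (\<Sum>i=0..length ks. smult (of_nat (sum_list ks - i) * (1 - fps_X) ^ i
                * of_nat (length ks choose i)) (zeta_qt [sum_list ks - i + 1])))"
    using eqN_trans[OF L2 eqN_sym[OF R]] unfolding ZS_def .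
qed


end
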